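(* Assume $x(0)=x'(0)=0$. Let $L_1(t,s)=\omega\sin(\omega(t-s))+\cos(\omega(t-s))$ and $L_2(t,s)=\omega^2\cos(\omega(t-s))-\omega\sin(\omega(t-s))$. The following are equivalent: (A) $y_1(t)\to0$ as $t\to\infty$, $\lim_{t\to\infty}\int_0^tE(t,s)L_1(t,s)y_1(s)\,ds=0$ and $\lim_{t\to\infty}\int_0^tE(t,s)L_2(t,s)y_1(s)\,ds=0$; (B) $x(t)\to0$ and $x'(t)\to0$ as $t\to\infty$.
   Context: Standing assumptions: $\omega>0$ is a constant; $p\in C^1([0,\infty))$ with $p(t)>0$ and $p'(t)<0$ for all $t\ge0$, $\int_0^\infty p(t)\,dt=\infty$ and $\int_0^\infty p(t)^2\,dt<\infty$; $f\in L^1_{\mathrm{loc}}([0,\infty))$. $x$ denotes the solution of $x''(t)+p(t)x'(t)+\omega^2x(t)=f(t)$, $t\ge0$. Notation: $E(t,s)=\exp(-\frac12\int_s^tp(\tau)\,d\tau)$ for $0\le s\le t$; $y_1(t)=\int_0^te^{-\omega^2(t-s)}f(s)\,ds$. *)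

theory Defs
  imports "HOL-Analysis.Analysis"
begin

definition Efun :: "(real \<Rightarrow> real) \<Rightarrow> real \<Rightarrow> real \<Rightarrow> real" where
  "Efun p t s = exp (- (1/2) * integral {s..t} p)"

definition y1 :: "real \<Rightarrow> (real \<Rightarrow> real) \<Rightarrow> real \<Rightarrow> real" where
  "y1 \<omega> f t = integral {0..t} (\<lambda>s. exp (- (\<omega>^2) * (t - s)) * f s)"

definition L1 :: "real \<Rightarrow> real \<Rightarrow> real \<Rightarrow> real" where
  "L1 \<omega> t s = \<omega> * sin (\<omega> * (t - s)) + cos (\<omega> * (t - s))"

definition L2 :: "real \<Rightarrow> real \<Rightarrow> real \<Rightarrow> real" where
  "L2 \<omega> t s = \<omega>^2 * cos (\<omega> * (t - s)) - \<omega> * sin (\<omega> * (t - s))"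

end

theory Submission
  imports Defs
begin



lemma abs_int_cont_mult:
  fixes h g :: "real \<Rightarrow> real"
  assumes "continuous_on {a..b} h" "g absolutely_integrable_on {a..b}"
  shows "(\<lambda>s. h s * g s) absolutely_integrable_on {a..b}"
  by (rule absolutely_integrable_bounded_measurable_product_real)
     (auto intro: assms continuous_imp_measurable_on_sets_lebesgue compact_imp_bounded compact_continuous_image)

lemma abs_int_imp_int: "g absolutely_integrable_on {a..b} \<Longrightarrow> (g::real\<Rightarrow>real) integrable_on {a..b}"
  using set_lebesgue_integral_eq_integral(1) by blast

lemma abs_int_abs: "g absolutely_integrable_on {a..b} \<Longrightarrow> (\<lambda>s. \<bar>(g::real\<Rightarrow>real) s\<bar>) integrable_on {a..b}"
  by (simp add: absolutely_integrable_on_def)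

lemma int_cmul: "(f::real\<Rightarrow>real) integrable_on S \<Longrightarrow> (\<lambda>x. c * f x) integrable_on S"
  using integrable_cmul[of f S c] by simp

lemma ibp_abs:
  fixes g h h' :: "real \<Rightarrow> real"
  assumes ab: "a \<le> b" and g: "g absolutely_integrable_on {a..b}"
    and hd: "\<And>s. s \<in> {a..b} \<Longrightarrow> (h has_real_derivative h' s) (at s within {a..b})"
    and h'c: "continuous_on {a..b} h'"
  shows "((\<lambda>s. h s * g s) has_integral
           (h b * integral {a..b} g - integral {a..b} (\<lambda>r. h' r * integral {a..r} g))) {a..b}"
proof -
  define G where "G r = integral {a..r} g" for r
  define J where "J r = integral {a..r} (\<lambda>s. \<bar>g s\<bar>)" for r
  have hc: "continuous_on {a..b} h" using hd by (rule DERIV_continuous_on)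
  have gsub: "g absolutely_integrable_on {u..v}" if "a \<le> u" "v \<le> b" for u v
    using g that by (intro absolutely_integrable_on_subinterval[OF g]) auto
  have Gc: "continuous_on {a..b} G" unfolding G_def
    by (rule indefinite_integral_continuous_1) (rule abs_int_imp_int[OF g])
  have Jc: "continuous_on {a..b} J" unfolding J_def
    by (rule indefinite_integral_continuous_1) (rule abs_int_abs[OF g])
  obtain M where M: "\<And>s. s \<in> {a..b} \<Longrightarrow> \<bar>h' s\<bar> \<le> M"
    using compact_imp_bounded[OF compact_continuous_image[OF h'c compact_Icc]]
    by (force simp: bounded_iff)
  have M0: "M \<ge> 0" using M[of a] ab by force
  have hg: "(\<lambda>s. h s * g s) absolutely_integrable_on {u..v}" if "a \<le> u" "v \<le> b" for u v
    by (rule abs_int_cont_mult[OF continuous_on_subset[OF hc] gsub]) (use that in auto)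
  have h'G: "continuous_on {u..v} (\<lambda>r. h' r * G r)" if "a \<le> u" "v \<le> b" for u v
    by (intro continuous_intros continuous_on_subset[OF h'c] continuous_on_subset[OF Gc]) (use that in auto)
  define \<Phi> where "\<Phi> u = integral {a..u} (\<lambda>s. h s * g s) - h u * G u + integral {a..u} (\<lambda>r. h' r * G r)" for u
  have key: "\<bar>\<Phi> v - \<Phi> u\<bar> \<le> 2 * M * (v - u) * (J v - J u)" if uv: "a \<le> u" "u \<le> v" "v \<le> b" for u v
  proof -
    have c1: "integral {a..v} (\<lambda>s. h s * g s) = integral {a..u} (\<lambda>s. h s * g s) + integral {u..v} (\<lambda>s. h s * g s)"
      using Henstock_Kurzweil_Integration.integral_combine[OF uv(1,2) abs_int_imp_int[OF hg[of a v]]] uv by simp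
    have c2: "integral {a..v} (\<lambda>r. h' r * G r) = integral {a..u} (\<lambda>r. h' r * G r) + integral {u..v} (\<lambda>r. h' r * G r)"
      using Henstock_Kurzweil_Integration.integral_combine[OF uv(1,2) integrable_continuous_interval[OF h'G[of a v]]] uv by simp
    have c3: "G v = G u + integral {u..v} g"
      unfolding G_def using Henstock_Kurzweil_Integration.integral_combine[OF uv(1,2) abs_int_imp_int[OF gsub[of a v]]] uv by simp
    have c4: "J v = J u + integral {u..v} (\<lambda>s. \<bar>g s\<bar>)"
      unfolding J_def using Henstock_Kurzweil_Integration.integral_combine[OF uv(1,2) abs_int_abs[OF gsub[of a v]]] uv by simp
    have ftc: "(h' has_integral (h v - h u)) {u..v}"
      by (rule fundamental_theorem_of_calculus[OF uv(2)])
         (use uv in \<open>auto simp: has_real_derivative_iff_has_vector_derivative[symmetric]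
               intro!: has_field_derivative_subset[OF hd]\<close>)
    have I1: "(\<lambda>s. (h s - h v) * g s) integrable_on {u..v}"
      by (rule abs_int_imp_int, rule abs_int_cont_mult, intro continuous_intros continuous_on_subset[OF hc])
         (use uv gsub in auto)
    have I2: "(\<lambda>s. h' s * (G s - G u)) integrable_on {u..v}"
      by (rule integrable_continuous_interval, intro continuous_intros continuous_on_subset[OF hc]
          continuous_on_subset[OF h'c] continuous_on_subset[OF Gc]) (use uv in auto)
    have e1: "integral {u..v} (\<lambda>s. (h s - h v) * g s) = integral {u..v} (\<lambda>s. h s * g s) - h v * integral {u..v} g"
    proof -
      have "integral {u..v} (\<lambda>s. (h s - h v) * g s) = integral {u..v} (\<lambda>s. h s * g s - h v * g s)"
        by (simp add: algebra_simps)
      also have "\<dots> = integral {u..v} (\<lambda>s. h s * g s) - integral {u..v} (\<lambda>s. h v * g s)"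
        by (rule integral_diff) (use abs_int_imp_int[OF hg] abs_int_imp_int[OF gsub] uv in \<open>auto intro!: int_cmul\<close>)
      finally show ?thesis by simp
    qed
    have e2: "integral {u..v} (\<lambda>s. h' s * (G s - G u)) = integral {u..v} (\<lambda>r. h' r * G r) - G u * (h v - h u)"
    proof -
      have "integral {u..v} (\<lambda>s. h' s * (G s - G u)) = integral {u..v} (\<lambda>s. h' s * G s - h' s * G u)"
        by (simp add: algebra_simps)
      also have "\<dots> = integral {u..v} (\<lambda>s. h' s * G s) - integral {u..v} (\<lambda>s. h' s * G u)"
        by (rule integral_diff) (use integrable_continuous_interval[OF h'G] ftc uv in \<open>auto intro!: integrable_on_mult_left\<close>)
      also have "integral {u..v} (\<lambda>s. h' s * G u) = G u * (h v - h u)"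
        using integral_unique[OF ftc] by simp
      finally show ?thesis by simp
    qed
    have eq: "\<Phi> v - \<Phi> u = integral {u..v} (\<lambda>s. (h s - h v) * g s) + integral {u..v} (\<lambda>s. h' s * (G s - G u))"
      unfolding \<Phi>_def e1 e2 c1 c2 c3 by (simp add: algebra_simps)
    have hb: "\<bar>h s - h v\<bar> \<le> M * (v - u)" if s: "s \<in> {u..v}" for s
    proof -
      have ftc2: "(h' has_integral (h v - h s)) {s..v}"
        by (rule fundamental_theorem_of_calculus)
           (use s uv in \<open>auto simp: has_real_derivative_iff_has_vector_derivative[symmetric]
               intro!: has_field_derivative_subset[OF hd]\<close>)
      have "norm (integral {s..v} h') \<le> integral {s..v} (\<lambda>_. M)"
        by (rule integral_norm_bound_integral) (use ftc2 s uv M in auto)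
      then have "\<bar>h v - h s\<bar> \<le> M * (v - s)" using integral_unique[OF ftc2] s by (simp add: mult.commute)
      moreover have "M \<ge> 0" using M[of a] uv by auto
      ultimately show ?thesis using s by (smt (verit) atLeastAtMost_iff mult_left_mono)
    qed
    have b1: "\<bar>integral {u..v} (\<lambda>s. (h s - h v) * g s)\<bar> \<le> M * (v - u) * (J v - J u)"
    proof -
      have "norm (integral {u..v} (\<lambda>s. (h s - h v) * g s)) \<le> integral {u..v} (\<lambda>s. M * (v - u) * \<bar>g s\<bar>)"
        by (rule integral_norm_bound_integral[OF I1])
           (use abs_int_abs[OF gsub] uv hb in \<open>auto simp: abs_mult intro!: mult_right_mono int_cmul\<close>)
      also have "\<dots> = M * (v - u) * (J v - J u)" using c4 by simp
      finally show ?thesis by simp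
    qed
    have Gb: "\<bar>G s - G u\<bar> \<le> J v - J u" if s: "s \<in> {u..v}" for s
    proof -
      have "G s = G u + integral {u..s} g"
        unfolding G_def using Henstock_Kurzweil_Integration.integral_combine[of a u s g] abs_int_imp_int[OF gsub[of a s]] uv s by simp
      moreover have "J s = J u + integral {u..s} (\<lambda>s. \<bar>g s\<bar>)"
        unfolding J_def using Henstock_Kurzweil_Integration.integral_combine[of a u s "\<lambda>s. \<bar>g s\<bar>"] abs_int_abs[OF gsub[of a s]] uv s by simp
      moreover have "J v = J s + integral {s..v} (\<lambda>s. \<bar>g s\<bar>)"
        unfolding J_def using Henstock_Kurzweil_Integration.integral_combine[of a s v "\<lambda>s. \<bar>g s\<bar>"] abs_int_abs[OF gsub[of a v]] uv s by simp
      moreover have "norm (integral {u..s} g) \<le> integral {u..s} (\<lambda>s. \<bar>g s\<bar>)"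
        by (rule integral_norm_bound_integral) (use abs_int_imp_int[OF gsub] abs_int_abs[OF gsub] uv s in auto)
      moreover have "integral {s..v} (\<lambda>s. \<bar>g s\<bar>) \<ge> 0"
        by (rule integral_nonneg) (use abs_int_abs[OF gsub] uv s in auto)
      ultimately show ?thesis by simp
    qed
    have b2: "\<bar>integral {u..v} (\<lambda>s. h' s * (G s - G u))\<bar> \<le> M * (v - u) * (J v - J u)"
    proof -
      have "norm (integral {u..v} (\<lambda>s. h' s * (G s - G u))) \<le> integral {u..v} (\<lambda>s. M * (J v - J u))"
        by (rule integral_norm_bound_integral[OF I2])
           (use uv M Gb M0 in \<open>auto simp: abs_mult intro!: mult_mono\<close>)
      then show ?thesis using uv by (simp add: algebra_simps)
    qed
    show ?thesis using eq b1 b2 by linarith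
  qed
  have deriv0: "(\<Phi> has_field_derivative 0) (at u within {a..b})" if u: "u \<in> {a..b}" for u
  proof -
    have "((\<lambda>v. (\<Phi> v - \<Phi> u) / (v - u)) \<longlongrightarrow> 0) (at u within {a..b})"
    proof (rule Lim_null_comparison)
      show "\<forall>\<^sub>F v in at u within {a..b}. norm ((\<Phi> v - \<Phi> u) / (v - u)) \<le> 2 * M * \<bar>J v - J u\<bar>"
        unfolding eventually_at_filter
      proof (intro always_eventually allI impI)
        fix v assume v: "v \<noteq> u" "v \<in> {a..b}"
        have M0: "M \<ge> 0" using M[of a] ab by auto
        have "\<bar>\<Phi> v - \<Phi> u\<bar> \<le> 2 * M * \<bar>v - u\<bar> * \<bar>J v - J u\<bar>"
        proof (cases "u \<le> v")
          case True
          have "2 * M * (v - u) * (J v - J u) \<le> 2 * M * (v - u) * \<bar>J v - J u\<bar>"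
            by (rule mult_left_mono) (use True M0 in auto)
          thus ?thesis using key[of u v] u v M0 True by (simp add: abs_mult)
        next
          case False
          have "2 * M * (u - v) * (J u - J v) \<le> 2 * M * (u - v) * \<bar>J v - J u\<bar>"
            by (rule mult_left_mono) (use False M0 in auto)
          thus ?thesis using key[of v u] u v M0 False by (simp add: abs_mult abs_minus_commute)
        qed
        then show "norm ((\<Phi> v - \<Phi> u) / (v - u)) \<le> 2 * M * \<bar>J v - J u\<bar>"
          using v by (simp add: divide_le_eq abs_minus_commute mult_ac)
      qed
      have J0: "((\<lambda>v. J v - J u) \<longlongrightarrow> 0) (at u within {a..b})"
        using Jc u by (metis LIM_zero continuous_on_def)
      then show "((\<lambda>v. 2 * M * \<bar>J v - J u\<bar>) \<longlongrightarrow> 0) (at u within {a..b})"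
        using tendsto_mult_right_zero[OF tendsto_rabs_zero[OF J0], of "2*M"] by (simp add: mult.assoc)
    qed
    then show ?thesis by (simp add: has_field_derivative_iff)
  qed
  obtain c where c: "\<And>u. u \<in> {a..b} \<Longrightarrow> \<Phi> u = c"
    using has_field_derivative_zero_constant[OF convex_real_interval(5) deriv0] by blast
  have "\<Phi> b = \<Phi> a" using c ab by auto
  then have "integral {a..b} (\<lambda>s. h s * g s) = h b * integral {a..b} g - integral {a..b} (\<lambda>r. h' r * integral {a..r} g)"
    unfolding \<Phi>_def G_def by simp
  with abs_int_imp_int[OF hg[of a b]] show ?thesis
    by (metis ab has_integral_integrable_integral order_refl)
qed




locale odes =
  fixes \<omega> :: real and p p' f x x' :: "real \<Rightarrow> real"
  assumes omega_pos: "\<omega> > 0"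
    and p_deriv: "\<And>t. t \<ge> 0 \<Longrightarrow> (p has_real_derivative p' t) (at t within {0..})"
    and p'_cont: "continuous_on {0..} p'"
    and p_pos: "\<And>t. t \<ge> 0 \<Longrightarrow> p t > 0"
    and p'_neg: "\<And>t. t \<ge> 0 \<Longrightarrow> p' t < 0"
    and p_int_infty: "filterlim (\<lambda>t. integral {0..t} p) at_top at_top"
    and p_sq_int: "(\<lambda>t. (p t)^2) integrable_on {0..}"
    and f_loc: "\<And>t. t \<ge> 0 \<Longrightarrow> f absolutely_integrable_on {0..t}"
    and x_deriv: "\<And>t. t \<ge> 0 \<Longrightarrow> (x has_real_derivative x' t) (at t within {0..})"
    and x'_cont: "continuous_on {0..} x'"
    and x_ode: "\<And>t. t \<ge> 0 \<Longrightarrow>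
       ((\<lambda>s. f s - p s * x' s - \<omega>^2 * x s) has_integral (x' t - x' 0)) {0..t}"
    and x0: "x 0 = 0" and x'0: "x' 0 = 0"
begin

definition "P t = integral {0..t} p"
definition "E2 t s = exp (- (P t - P s) / 2)"
definition "Y t = integral {0..t} (\<lambda>r. exp (\<omega>^2 * r) * f r)"
abbreviation "y \<equiv> y1 \<omega> f"

lemma sub0: "t \<ge> 0 \<Longrightarrow> {0..t} \<subseteq> {0::real..}" by auto

lemma p_cont: "continuous_on {0..} p"
  by (rule DERIV_continuous_on[OF p_deriv]) auto

lemma x_cont: "continuous_on {0..} x"
  by (rule DERIV_continuous_on[OF x_deriv]) auto

lemma contsub: "continuous_on {0..} g \<Longrightarrow> 0 \<le> a \<Longrightarrow> continuous_on {a..b} (g :: real \<Rightarrow> real)"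
  by (erule continuous_on_subset) auto

lemma p_d: "0 \<le> a \<Longrightarrow> s \<in> {a..b} \<Longrightarrow> (p has_real_derivative p' s) (at s within {a..b})"
  by (rule has_field_derivative_subset[OF p_deriv]) auto

lemma x_d: "0 \<le> a \<Longrightarrow> s \<in> {a..b} \<Longrightarrow> (x has_real_derivative x' s) (at s within {a..b})"
  by (rule has_field_derivative_subset[OF x_deriv]) auto

lemma p_mono: assumes "0 \<le> s" "s \<le> t" shows "p t \<le> p s"
proof -
  have ftc: "(p' has_integral (p t - p s)) {s..t}"
    by (rule fundamental_theorem_of_calculus[OF assms(2)])
       (use assms in \<open>auto simp: has_real_derivative_iff_has_vector_derivative[symmetric] intro!: p_d\<close>)
  moreover have "(p' has_integral integral {s..t} p') {s..t}" using ftc by blast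
  ultimately have "p t - p s = integral {s..t} p'" by (simp add: integral_unique)
  moreover have "integral {s..t} p' \<le> integral {s..t} (\<lambda>_. 0)"
    by (rule integral_le) (use assms p'_neg ftc in \<open>auto intro: less_imp_le\<close>)
  ultimately show ?thesis by simp
qed

lemma p_bnd: "0 \<le> t \<Longrightarrow> 0 < p t \<and> p t \<le> p 0"
  using p_pos p_mono[of 0 t] by auto

lemma p_int: "0 \<le> a \<Longrightarrow> p integrable_on {a..b}"
  by (rule integrable_continuous_interval, rule contsub[OF p_cont])

lemma P_diff: assumes "0 \<le> s" "s \<le> t" shows "integral {s..t} p = P t - P s"
  using Henstock_Kurzweil_Integration.integral_combine[OF assms p_int[of 0 t]] unfolding P_def by simp

lemma Efun_eq: "0 \<le> s \<Longrightarrow> s \<le> t \<Longrightarrow> Efun p t s = E2 t s"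
proof -
  assume "0 \<le> s" "s \<le> t"
  then have e: "integral {s..t} p = P t - P s" by (rule P_diff)
  have "- (1/2) * integral {s..t} p = - (P t - P s) / 2" unfolding e by linarith
  then show ?thesis unfolding Efun_def E2_def by simp
qed

lemma P_d: "0 \<le> t \<Longrightarrow> s \<in> {0..t} \<Longrightarrow> (P has_real_derivative p s) (at s within {0..t})"
  unfolding P_def by (rule integral_has_real_derivative[OF contsub[OF p_cont]]) auto

lemma P_cont: "0 \<le> t \<Longrightarrow> continuous_on {0..t} P"
  by (rule DERIV_continuous_on, rule P_d) auto

lemma E2_d: "0 \<le> t \<Longrightarrow> s \<in> {0..t} \<Longrightarrow> ((\<lambda>s. E2 t s) has_real_derivative (E2 t s * (p s / 2))) (at s within {0..t})"
  unfolding E2_def by (auto intro!: derivative_eq_intros P_d simp: field_simps)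

lemma E2_cont: "0 \<le> t \<Longrightarrow> continuous_on {0..t} (E2 t)"
  by (rule DERIV_continuous_on, rule E2_d) auto

lemma E2_pos: "E2 t s > 0" unfolding E2_def by simp

lemma P_mono: "0 \<le> s \<Longrightarrow> s \<le> t \<Longrightarrow> P s \<le> P t"
  using P_diff[of s t] integral_nonneg[OF p_int[of s t]] p_pos by (simp add: less_imp_le)

lemma E2_le1: "0 \<le> s \<Longrightarrow> s \<le> t \<Longrightarrow> E2 t s \<le> 1"
  unfolding E2_def using P_mono[of s t] by simp

lemma E2_mono: "0 \<le> s \<Longrightarrow> s \<le> T \<Longrightarrow> E2 t s \<le> E2 t T"
  unfolding E2_def using P_mono[of s T] by simp

lemma E2_tt: "E2 t t = 1" unfolding E2_def by simp

lemma E2_lim: "((\<lambda>t. E2 t T) \<longlongrightarrow> 0) at_top"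
proof -
  have "filterlim (\<lambda>t. 1/2 * P t) at_top at_top"
    by (rule filterlim_tendsto_pos_mult_at_top[OF tendsto_const]) (use p_int_infty in \<open>auto simp: P_def\<close>)
  then have "filterlim (\<lambda>t. - (1/2 * P t)) at_bot at_top"
    by (simp add: filterlim_uminus_at_top)
  then have "((\<lambda>t. exp (- (1/2 * P t))) \<longlongrightarrow> 0) at_top"
    by (rule filterlim_compose[OF exp_at_bot])
  then have "((\<lambda>t. exp (P T / 2) * exp (- (1/2 * P t))) \<longlongrightarrow> 0) at_top"
    by (rule tendsto_mult_right_zero)
  moreover have "exp (P T / 2) * exp (- (1/2 * P t)) = E2 t T" for t
    unfolding E2_def by (simp add: exp_add[symmetric] field_simps)
  ultimately show ?thesis by simp
qed

lemma fe_abs: "0 \<le> t \<Longrightarrow> (\<lambda>r. exp (\<omega>^2 * r) * f r) absolutely_integrable_on {0..t}"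
  by (rule abs_int_cont_mult[OF _ f_loc]) (auto intro!: continuous_intros)

lemma y_eq: "y t = exp (- (\<omega>^2) * t) * Y t"
proof -
  have "y t = integral {0..t} (\<lambda>r. exp (- (\<omega>^2) * t) * (exp (\<omega>^2 * r) * f r))"
    unfolding y1_def by (rule integral_cong) (simp add: exp_add[symmetric] algebra_simps)
  also have "\<dots> = exp (- (\<omega>^2) * t) * Y t" unfolding Y_def by simp
  finally show ?thesis .
qed

lemma Y_cont: "0 \<le> t \<Longrightarrow> continuous_on {0..t} Y"
  unfolding Y_def by (rule indefinite_integral_continuous_1, rule abs_int_imp_int, rule fe_abs)

lemma y_cont: "0 \<le> t \<Longrightarrow> continuous_on {0..t} y"
  unfolding y_eq by (intro continuous_intros Y_cont)

end


context odes begin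

lemma cint: "continuous_on {a..b} g \<Longrightarrow> ((g::real\<Rightarrow>real) has_integral integral {a..b} g) {a..b}"
  using integrable_continuous_interval integrable_integral by blast

lemma master:
  fixes k k' k'' :: "real \<Rightarrow> real"
  assumes t: "0 \<le> t"
   and kd: "\<And>s. s \<in> {0..t} \<Longrightarrow> (k has_real_derivative k' s) (at s within {0..t})"
   and k'd: "\<And>s. s \<in> {0..t} \<Longrightarrow> (k' has_real_derivative k'' s) (at s within {0..t})"
   and k''c: "continuous_on {0..t} k''"
  shows "k t * x' t - k' t * x t + p t * k t * x t = k t * y t
      + integral {0..t} (\<lambda>s. (\<omega>^2 * k s - k' s) * y s)
      + integral {0..t} (\<lambda>s. (k' s * p s + k s * p' s - k'' s - \<omega>^2 * k s) * x s)"
proof -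
  have kc: "continuous_on {0..t} k" by (rule DERIV_continuous_on[OF kd])
  have k'c: "continuous_on {0..t} k'" by (rule DERIV_continuous_on[OF k'd])
  have xc: "continuous_on {0..t} x" by (rule contsub[OF x_cont]) simp
  have x'c: "continuous_on {0..t} x'" by (rule contsub[OF x'_cont]) simp
  have pc: "continuous_on {0..t} p" by (rule contsub[OF p_cont]) simp
  have p'c: "continuous_on {0..t} p'" by (rule contsub[OF p'_cont]) simp
  have yc: "continuous_on {0..t} y" by (rule y_cont[OF t])
  define gg where "gg s = f s - p s * x' s - \<omega>^2 * x s" for s
  have gg_abs: "gg absolutely_integrable_on {0..t}"
    unfolding gg_def
    by (intro set_integral_diff(1) f_loc[OF t] absolutely_integrable_continuous_real continuous_intros pc x'c xc)
  have gg_int: "integral {0..r} gg = x' r" if "r \<in> {0..t}" for r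
    using x_ode[of r] that x'0 unfolding gg_def by (simp add: integral_unique)
  define Ia where "Ia = integral {0..t} (\<lambda>r. k' r * x' r)"
  define Ib where "Ib = integral {0..t} (\<lambda>r. k'' r * x r)"
  define Ic where "Ic = integral {0..t} (\<lambda>r. (k' r * p r + k r * p' r) * x r)"
  define Id where "Id = integral {0..t} (\<lambda>r. k r * p r * x' r)"
  define Ie where "Ie = integral {0..t} (\<lambda>r. k r * x r)"
  define Iy where "Iy = integral {0..t} (\<lambda>r. (k' r - \<omega>^2 * k r) * y r)"
  have hIa: "((\<lambda>r. k' r * x' r) has_integral Ia) {0..t}" unfolding Ia_def
    by (intro cint continuous_intros k'c x'c)
  have hIb: "((\<lambda>r. k'' r * x r) has_integral Ib) {0..t}" unfolding Ib_def
    by (intro cint continuous_intros k''c xc)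
  have hIc: "((\<lambda>r. (k' r * p r + k r * p' r) * x r) has_integral Ic) {0..t}" unfolding Ic_def
    by (intro cint continuous_intros k'c kc pc p'c xc)
  have hId: "((\<lambda>r. k r * p r * x' r) has_integral Id) {0..t}" unfolding Id_def
    by (intro cint continuous_intros kc pc x'c)
  have hIe: "((\<lambda>r. k r * x r) has_integral Ie) {0..t}" unfolding Ie_def
    by (intro cint continuous_intros kc xc)
  have hIy: "((\<lambda>r. (k' r - \<omega>^2 * k r) * y r) has_integral Iy) {0..t}" unfolding Iy_def
    by (intro cint continuous_intros kc k'c yc)
  note a0 = ibp_abs[OF t gg_abs kd k'c]
  have "integral {0..t} (\<lambda>r. k' r * integral {0..r} gg) = Ia"
    unfolding Ia_def by (rule integral_cong) (simp add: gg_int)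
  with a0 have a: "((\<lambda>s. k s * gg s) has_integral (k t * x' t - Ia)) {0..t}"
    using gg_int[of t] t by simp
  have b0: "((\<lambda>s. k'' s * x s + k' s * x' s) has_integral (k' t * x t - k' 0 * x 0)) {0..t}"
    by (rule fundamental_theorem_of_calculus[OF t])
       (auto simp: has_real_derivative_iff_has_vector_derivative[symmetric]
             intro!: derivative_eq_intros k'd x_d)
  have b: "Ib + Ia = k' t * x t"
    using has_integral_unique[OF has_integral_add[OF hIb hIa] b0] x0 by simp
  have c0: "((\<lambda>s. (k' s * p s + k s * p' s) * x s + k s * p s * x' s) has_integral (k t * p t * x t - k 0 * p 0 * x 0)) {0..t}"
    by (rule fundamental_theorem_of_calculus[OF t])
       (auto simp: has_real_derivative_iff_has_vector_derivative[symmetric] algebra_simps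
             intro!: derivative_eq_intros kd x_d p_d)
  have c: "Ic + Id = k t * p t * x t"
    using has_integral_unique[OF has_integral_add[OF hIc hId] c0] x0 by simp
  have hd: "((\<lambda>s. k s * exp (- (\<omega>^2) * s)) has_real_derivative (k' s - \<omega>^2 * k s) * exp (- (\<omega>^2) * s)) (at s within {0..t})"
    if "s \<in> {0..t}" for s
    by (auto intro!: derivative_eq_intros kd that simp: algebra_simps)
  have h'c: "continuous_on {0..t} (\<lambda>s. (k' s - \<omega>^2 * k s) * exp (- (\<omega>^2) * s))"
    by (intro continuous_intros kc k'c)
  note d0 = ibp_abs[OF t fe_abs[OF t] hd h'c]
  have ee: "exp (- (\<omega>^2) * s) * exp (\<omega>^2 * s) = 1" for s
    by (simp add: exp_add[symmetric])
  have eq1: "integral {0..t} (\<lambda>r. (k' r - (\<omega>\<^sup>2) * k r) * exp (- (\<omega>\<^sup>2) * r) * integral {0..r} (\<lambda>r. exp (\<omega>\<^sup>2 * r) * f r)) = Iy"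
    unfolding Iy_def by (rule integral_cong) (simp add: y_eq Y_def)
  have eq2: "k t * exp (- (\<omega>\<^sup>2) * t) * integral {0..t} (\<lambda>r. exp (\<omega>\<^sup>2 * r) * f r) = k t * y t"
    by (simp add: y_eq Y_def)
  have d1: "((\<lambda>s. k s * exp (- (\<omega>\<^sup>2) * s) * (exp (\<omega>\<^sup>2 * s) * f s)) has_integral (k t * y t - Iy)) {0..t}"
    using d0 unfolding eq1 eq2 .
  have d: "((\<lambda>s. k s * f s) has_integral (k t * y t - Iy)) {0..t}"
  proof -
    have "k s * exp (- (\<omega>\<^sup>2) * s) * (exp (\<omega>\<^sup>2 * s) * f s) = k s * f s" for s
    proof -
      have "k s * exp (- (\<omega>\<^sup>2) * s) * (exp (\<omega>\<^sup>2 * s) * f s) = k s * f s * (exp (- (\<omega>\<^sup>2) * s) * exp (\<omega>\<^sup>2 * s))"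
        by (simp only: mult_ac)
      then show ?thesis by (simp only: ee mult_1_right)
    qed
    then show ?thesis using d1 by (simp only:)
  qed
  have e0: "((\<lambda>s. k s * f s - k s * p s * x' s - \<omega>^2 * (k s * x s)) has_integral (k t * y t - Iy - Id - \<omega>^2 * Ie)) {0..t}"
    by (intro has_integral_diff d hId has_integral_mult_right hIe)
  have "((\<lambda>s. k s * gg s) has_integral (k t * y t - Iy - Id - \<omega>^2 * Ie)) {0..t}"
    using e0 unfolding gg_def by (simp add: algebra_simps)
  then have e: "k t * x' t - Ia = k t * y t - Iy - Id - \<omega>^2 * Ie"
    using has_integral_unique[OF a] by blast
  have "((\<lambda>s. (\<omega>^2 * k s - k' s) * y s) has_integral - Iy) {0..t}"
    using has_integral_neg[OF hIy] by (simp add: algebra_simps)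
  then have f1: "integral {0..t} (\<lambda>s. (\<omega>^2 * k s - k' s) * y s) = - Iy" by (rule integral_unique)
  have "((\<lambda>s. (k' s * p s + k s * p' s - k'' s - \<omega>^2 * k s) * x s) has_integral (Ic - Ib - \<omega>^2 * Ie)) {0..t}"
    using has_integral_diff[OF has_integral_diff[OF hIc hIb] has_integral_mult_right[OF hIe, of "\<omega>^2"]]
    by (simp add: algebra_simps)
  then have f2: "integral {0..t} (\<lambda>s. (k' s * p s + k s * p' s - k'' s - \<omega>^2 * k s) * x s) = Ic - Ib - \<omega>^2 * Ie"
    by (rule integral_unique)
  have "p t * k t * x t = k t * p t * x t" by simp
  then show ?thesis using e b c f1 f2 by linarith
qed
end


context odes begin

definition "q s = p' s / 2 + (p s)^2 / 4"

lemma x_rep: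
  assumes t: "0 \<le> t"
  shows "x t = integral {0..t} (\<lambda>s. Efun p t s * L1 \<omega> t s * y s)
     - integral {0..t} (\<lambda>s. E2 t s * p s * sin (\<omega> * (t - s)) * y s / (2 * \<omega>))
     + integral {0..t} (\<lambda>s. E2 t s * q s * sin (\<omega> * (t - s)) * x s / \<omega>)"
proof -
  define k where "k s = E2 t s * sin (\<omega> * (t - s)) / \<omega>" for s
  define k' where "k' s = E2 t s * (p s / 2 * sin (\<omega> * (t - s)) / \<omega> - cos (\<omega> * (t - s)))" for s
  define k'' where "k'' s = E2 t s * (p s / 2 * (p s / 2 * sin (\<omega> * (t - s)) / \<omega> - cos (\<omega> * (t - s)))
      + p' s / 2 * sin (\<omega> * (t - s)) / \<omega> - p s / 2 * cos (\<omega> * (t - s)) - \<omega> * sin (\<omega> * (t - s)))" for s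
  have w: "\<omega> \<noteq> 0" using omega_pos by simp
  have kd: "(k has_real_derivative k' s) (at s within {0..t})" if "s \<in> {0..t}" for s
    unfolding k_def k'_def using w
    by (auto intro!: derivative_eq_intros E2_d[OF t that] simp: field_simps)
  have k'd: "(k' has_real_derivative k'' s) (at s within {0..t})" if "s \<in> {0..t}" for s
    unfolding k'_def k''_def using w that
    by (auto intro!: derivative_eq_intros E2_d[OF t that] p_d simp: field_simps)
  have k''c: "continuous_on {0..t} k''"
    unfolding k''_def by (intro continuous_intros E2_cont t contsub[OF p_cont] contsub[OF p'_cont]) (use w in auto)
  note m = master[OF t kd k'd k''c]
  have kt: "k t = 0" "k' t = -1" unfolding k_def k'_def by (simp_all add: E2_tt)
  have yc: "continuous_on {0..t} y" by (rule y_cont[OF t])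
  have xc: "continuous_on {0..t} x" by (rule contsub[OF x_cont]) simp
  have pc: "continuous_on {0..t} p" by (rule contsub[OF p_cont]) simp
  have p'c: "continuous_on {0..t} p'" by (rule contsub[OF p'_cont]) simp
  have Ec: "continuous_on {0..t} (E2 t)" by (rule E2_cont[OF t])
  have I1: "integral {0..t} (\<lambda>s. (\<omega>^2 * k s - k' s) * y s) =
     integral {0..t} (\<lambda>s. Efun p t s * L1 \<omega> t s * y s)
     - integral {0..t} (\<lambda>s. E2 t s * p s * sin (\<omega> * (t - s)) * y s / (2 * \<omega>))"
  proof -
    have "integral {0..t} (\<lambda>s. (\<omega>^2 * k s - k' s) * y s) = integral {0..t} (\<lambda>s. E2 t s * L1 \<omega> t s * y s
            - E2 t s * p s * sin (\<omega> * (t - s)) * y s / (2 * \<omega>))"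
      by (rule integral_cong) (use w in \<open>simp add: k_def k'_def L1_def field_simps power2_eq_square\<close>)
    also have "\<dots> = integral {0..t} (\<lambda>s. E2 t s * L1 \<omega> t s * y s)
            - integral {0..t} (\<lambda>s. E2 t s * p s * sin (\<omega> * (t - s)) * y s / (2 * \<omega>))"
      by (rule integral_diff; rule integrable_continuous_interval)
         (use w in \<open>auto simp: L1_def intro!: continuous_intros Ec yc pc\<close>)
    also have "integral {0..t} (\<lambda>s. E2 t s * L1 \<omega> t s * y s) = integral {0..t} (\<lambda>s. Efun p t s * L1 \<omega> t s * y s)"
      by (rule integral_cong) (simp add: Efun_eq)
    finally show ?thesis .
  qed
  have I2: "integral {0..t} (\<lambda>s. (k' s * p s + k s * p' s - k'' s - \<omega>^2 * k s) * x s) =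
      integral {0..t} (\<lambda>s. E2 t s * q s * sin (\<omega> * (t - s)) * x s / \<omega>)"
    by (rule integral_cong) (use w in \<open>simp add: k_def k'_def k''_def q_def field_simps power2_eq_square\<close>)
  show ?thesis using m kt I1 I2 by simp
qed
lemma x'_rep:
  assumes t: "0 \<le> t"
  shows "x' t = y t - p t * x t / 2 + integral {0..t} (\<lambda>s. Efun p t s * L2 \<omega> t s * y s)
     - integral {0..t} (\<lambda>s. E2 t s * p s * cos (\<omega> * (t - s)) * y s / 2)
     + integral {0..t} (\<lambda>s. E2 t s * q s * cos (\<omega> * (t - s)) * x s)"
proof -
  define k where "k s = E2 t s * cos (\<omega> * (t - s))" for s
  define k' where "k' s = E2 t s * (p s / 2 * cos (\<omega> * (t - s)) + \<omega> * sin (\<omega> * (t - s)))" for s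
  define k'' where "k'' s = E2 t s * (p s / 2 * (p s / 2 * cos (\<omega> * (t - s)) + \<omega> * sin (\<omega> * (t - s)))
      + p' s / 2 * cos (\<omega> * (t - s)) + p s / 2 * \<omega> * sin (\<omega> * (t - s)) - \<omega>^2 * cos (\<omega> * (t - s)))" for s
  have w: "\<omega> \<noteq> 0" using omega_pos by simp
  have kd: "(k has_real_derivative k' s) (at s within {0..t})" if "s \<in> {0..t}" for s
    unfolding k_def k'_def using w
    by (auto intro!: derivative_eq_intros E2_d[OF t that] simp: field_simps)
  have k'd: "(k' has_real_derivative k'' s) (at s within {0..t})" if "s \<in> {0..t}" for s
    unfolding k'_def k''_def using w that
    by (auto intro!: derivative_eq_intros E2_d[OF t that] p_d simp: field_simps power2_eq_square)
  have k''c: "continuous_on {0..t} k''"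
    unfolding k''_def by (intro continuous_intros E2_cont t contsub[OF p_cont] contsub[OF p'_cont]) (use w in auto)
  note m = master[OF t kd k'd k''c]
  have kt: "k t = 1" "k' t = p t / 2" unfolding k_def k'_def by (simp_all add: E2_tt)
  have yc: "continuous_on {0..t} y" by (rule y_cont[OF t])
  have xc: "continuous_on {0..t} x" by (rule contsub[OF x_cont]) simp
  have pc: "continuous_on {0..t} p" by (rule contsub[OF p_cont]) simp
  have p'c: "continuous_on {0..t} p'" by (rule contsub[OF p'_cont]) simp
  have Ec: "continuous_on {0..t} (E2 t)" by (rule E2_cont[OF t])
  have I1: "integral {0..t} (\<lambda>s. (\<omega>^2 * k s - k' s) * y s) =
     integral {0..t} (\<lambda>s. Efun p t s * L2 \<omega> t s * y s)
     - integral {0..t} (\<lambda>s. E2 t s * p s * cos (\<omega> * (t - s)) * y s / 2)"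
  proof -
    have "integral {0..t} (\<lambda>s. (\<omega>^2 * k s - k' s) * y s) = integral {0..t} (\<lambda>s. E2 t s * L2 \<omega> t s * y s
            - E2 t s * p s * cos (\<omega> * (t - s)) * y s / 2)"
      by (rule integral_cong) (use w in \<open>simp add: k_def k'_def L2_def field_simps power2_eq_square\<close>)
    also have "\<dots> = integral {0..t} (\<lambda>s. E2 t s * L2 \<omega> t s * y s)
            - integral {0..t} (\<lambda>s. E2 t s * p s * cos (\<omega> * (t - s)) * y s / 2)"
      by (rule integral_diff; rule integrable_continuous_interval)
         (use w in \<open>auto simp: L2_def intro!: continuous_intros Ec yc pc\<close>)
    also have "integral {0..t} (\<lambda>s. E2 t s * L2 \<omega> t s * y s) = integral {0..t} (\<lambda>s. Efun p t s * L2 \<omega> t s * y s)"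
      by (rule integral_cong) (simp add: Efun_eq)
    finally show ?thesis .
  qed
  have I2: "integral {0..t} (\<lambda>s. (k' s * p s + k s * p' s - k'' s - \<omega>^2 * k s) * x s) =
      integral {0..t} (\<lambda>s. E2 t s * q s * cos (\<omega> * (t - s)) * x s)"
    by (rule integral_cong) (use w in \<open>simp add: k_def k'_def k''_def q_def field_simps power2_eq_square\<close>)
  show ?thesis using m kt I1 I2 by simp
qed

lemma y_rep:
  assumes t: "0 \<le> t"
  shows "y t = x' t - \<omega>^2 * x t + p t * x t
     - integral {0..t} (\<lambda>s. exp (- (\<omega>^2) * (t - s)) * (\<omega>^2 * p s + p' s - \<omega>^4 - \<omega>^2) * x s)"
proof -
  define k where "k s = exp (- (\<omega>^2) * (t - s))" for s
  define k' where "k' s = \<omega>^2 * exp (- (\<omega>^2) * (t - s))" for s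
  define k'' where "k'' s = \<omega>^4 * exp (- (\<omega>^2) * (t - s))" for s
  have kd: "(k has_real_derivative k' s) (at s within {0..t})" if "s \<in> {0..t}" for s
    unfolding k_def k'_def by (auto intro!: derivative_eq_intros simp: field_simps)
  have k'd: "(k' has_real_derivative k'' s) (at s within {0..t})" if "s \<in> {0..t}" for s
    unfolding k'_def k''_def by (auto intro!: derivative_eq_intros simp: field_simps power2_eq_square power4_eq_xxxx)
  have k''c: "continuous_on {0..t} k''"
    unfolding k''_def by (intro continuous_intros)
  note m = master[OF t kd k'd k''c]
  have kt: "k t = 1" "k' t = \<omega>^2" unfolding k_def k'_def by simp_all
  have I1: "integral {0..t} (\<lambda>s. (\<omega>^2 * k s - k' s) * y s) = 0"
    by (simp add: k_def k'_def)
  have I2: "integral {0..t} (\<lambda>s. (k' s * p s + k s * p' s - k'' s - \<omega>^2 * k s) * x s) =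
      integral {0..t} (\<lambda>s. exp (- (\<omega>^2) * (t - s)) * (\<omega>^2 * p s + p' s - \<omega>^4 - \<omega>^2) * x s)"
    by (rule integral_cong) (simp add: k_def k'_def k''_def field_simps)
  show ?thesis using m kt I1 I2 by simp
qed

end



lemma cont_sub0: "(\<And>t. 0 \<le> t \<Longrightarrow> continuous_on {0..t} g) \<Longrightarrow> 0 \<le> a \<Longrightarrow> b \<le> c \<Longrightarrow> 0 \<le> c \<Longrightarrow> continuous_on {a..b} (g::real\<Rightarrow>real)"
  by (rule continuous_on_subset[of "{0..c}"]) auto

lemma toeplitz0:
  fixes D :: "real \<Rightarrow> real \<Rightarrow> real" and w \<phi> :: "real \<Rightarrow> real"
  assumes Dnn: "\<And>t s. 0 \<le> s \<Longrightarrow> s \<le> t \<Longrightarrow> 0 \<le> D t s"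
   and Dmono: "\<And>t s T. 0 \<le> s \<Longrightarrow> s \<le> T \<Longrightarrow> T \<le> t \<Longrightarrow> D t s \<le> D t T"
   and Dlim: "\<And>T. 0 \<le> T \<Longrightarrow> ((\<lambda>t. D t T) \<longlongrightarrow> 0) at_top"
   and Dc: "\<And>t. 0 \<le> t \<Longrightarrow> continuous_on {0..t} (D t)"
   and wnn: "\<And>s. 0 \<le> s \<Longrightarrow> 0 \<le> w s"
   and wc: "\<And>t. 0 \<le> t \<Longrightarrow> continuous_on {0..t} w"
   and W: "\<And>t. 0 \<le> t \<Longrightarrow> integral {0..t} (\<lambda>s. D t s * w s) \<le> W"
   and \<phi>nn: "\<And>s. 0 \<le> s \<Longrightarrow> 0 \<le> \<phi> s"
   and \<phi>c: "\<And>t. 0 \<le> t \<Longrightarrow> continuous_on {0..t} \<phi>"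
   and \<phi>lim: "(\<phi> \<longlongrightarrow> 0) at_top"
  shows "((\<lambda>t. integral {0..t} (\<lambda>s. D t s * w s * \<phi> s)) \<longlongrightarrow> 0) at_top"
proof (rule tendstoI)
  fix \<epsilon> :: real assume e: "\<epsilon> > 0"
  define c where "c = \<epsilon> / (2 * (\<bar>W\<bar> + 1))"
  have c: "c > 0" using e by (simp add: c_def)
  have cW: "c * W \<le> \<epsilon> / 2"
  proof -
    have "c * W \<le> c * (\<bar>W\<bar> + 1)" using c by (intro mult_left_mono) auto
    also have "\<dots> = \<epsilon> / 2" unfolding c_def by (simp add: field_simps)
    finally show ?thesis .
  qed
  have "\<forall>\<^sub>F s in at_top. dist (\<phi> s) 0 < c" using \<phi>lim c by (rule tendstoD)
  then obtain N where N: "\<And>s. s \<ge> N \<Longrightarrow> \<bar>\<phi> s\<bar> < c" unfolding eventually_at_top_linorder by auto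
  define T where "T = max N 0"
  have T0: "0 \<le> T" by (simp add: T_def)
  have phiT: "\<phi> s \<le> c" if "s \<ge> T" for s using N[of s] that by (auto simp: T_def)
  obtain B where B': "\<And>s. s \<in> {0..T} \<Longrightarrow> \<bar>\<phi> s\<bar> \<le> B"
    using compact_imp_bounded[OF compact_continuous_image[OF \<phi>c[OF T0] compact_Icc]]
    by (force simp: bounded_iff)
  have B: "\<phi> s \<le> B" if "s \<in> {0..T}" for s using B'[OF that] by linarith
  define C0 where "C0 = integral {0..T} w"
  have B0: "0 \<le> B" using B[of 0] \<phi>nn[of 0] T0 by auto
  have "((\<lambda>t. D t T * (B * C0)) \<longlongrightarrow> 0) at_top"
    using tendsto_mult_left_zero[OF Dlim[OF T0]] by simp
  then have "\<forall>\<^sub>F t in at_top. dist (D t T * (B * C0)) 0 < \<epsilon> / 2" using e by (intro tendstoD) auto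
  moreover have "\<forall>\<^sub>F t in at_top. t \<ge> T" by (rule eventually_ge_at_top)
  ultimately show "\<forall>\<^sub>F t in at_top. dist (integral {0..t} (\<lambda>s. D t s * w s * \<phi> s)) 0 < \<epsilon>"
  proof eventually_elim
    case (elim t)
    have t0: "0 \<le> t" using elim T0 by linarith
    have cc0: "continuous_on {0..t} (\<lambda>s. D t s * w s * \<phi> s)"
      by (intro continuous_intros \<phi>c wc Dc t0)
    have cc: "continuous_on {a..b} (\<lambda>s. D t s * w s * \<phi> s)" if "0 \<le> a" "b \<le> t" for a b
      by (rule continuous_on_subset[OF cc0]) (use that in auto)
    have cc20: "continuous_on {0..t} (\<lambda>s. D t s * w s)"
      by (intro continuous_intros wc Dc t0)
    have cc2: "continuous_on {a..b} (\<lambda>s. D t s * w s)" if "0 \<le> a" "b \<le> t" for a b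
      by (rule continuous_on_subset[OF cc20]) (use that in auto)
    have split: "integral {0..t} (\<lambda>s. D t s * w s * \<phi> s) = integral {0..T} (\<lambda>s. D t s * w s * \<phi> s) + integral {T..t} (\<lambda>s. D t s * w s * \<phi> s)"
      using Henstock_Kurzweil_Integration.integral_combine[OF T0 elim(2) integrable_continuous_interval[OF cc]] by simp
    have split2: "integral {0..t} (\<lambda>s. D t s * w s) = integral {0..T} (\<lambda>s. D t s * w s) + integral {T..t} (\<lambda>s. D t s * w s)"
      using Henstock_Kurzweil_Integration.integral_combine[OF T0 elim(2) integrable_continuous_interval[OF cc2]] by simp
    have p1: "integral {0..T} (\<lambda>s. D t s * w s * \<phi> s) \<le> integral {0..T} (\<lambda>s. D t T * B * w s)"
      by (rule integral_le, rule integrable_continuous_interval[OF cc],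
          use T0 elim in auto, intro integrable_continuous_interval continuous_intros cont_sub0[OF wc])
         (use T0 elim Dmono Dnn wnn B \<phi>nn B0 in \<open>auto intro!: mult_mono mult_nonneg_nonneg simp: mult.commute mult.left_commute\<close>)
    have p1': "integral {0..T} (\<lambda>s. D t T * B * w s) = D t T * B * C0"
      unfolding C0_def by simp
    have p2: "integral {T..t} (\<lambda>s. D t s * w s * \<phi> s) \<le> integral {T..t} (\<lambda>s. c * (D t s * w s))"
    proof (rule integral_le)
      show "(\<lambda>s. D t s * w s * \<phi> s) integrable_on {T..t}"
        by (rule integrable_continuous_interval[OF cc]) (use T0 in auto)
      show "(\<lambda>s. c * (D t s * w s)) integrable_on {T..t}"
        by (rule int_cmul, rule integrable_continuous_interval[OF cc2]) (use T0 in auto)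
      fix s assume s: "s \<in> {T..t}"
      have "0 \<le> D t s * w s" using Dnn wnn s T0 by auto
      moreover have "\<phi> s \<le> c" using phiT s by auto
      ultimately show "D t s * w s * \<phi> s \<le> c * (D t s * w s)"
        by (metis mult.commute mult_left_mono)
    qed
    have p3: "integral {0..T} (\<lambda>s. D t s * w s) \<ge> 0"
      by (rule integral_nonneg, rule integrable_continuous_interval[OF cc2])
         (use T0 elim Dnn wnn in auto)
    have p4: "integral {T..t} (\<lambda>s. c * (D t s * w s)) \<le> c * W"
      using split2 p3 W[OF t0] c by (simp add: mult_left_mono)
    have p5: "integral {0..t} (\<lambda>s. D t s * w s * \<phi> s) \<ge> 0"
      by (rule integral_nonneg, rule integrable_continuous_interval[OF cc])
         (use Dnn wnn \<phi>nn in auto)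
    have q1: "D t T * B * C0 < \<epsilon> / 2" using elim(1) by (simp add: mult.assoc)
    have "integral {0..t} (\<lambda>s. D t s * w s * \<phi> s) < \<epsilon>"
      using split p1 p1' p2 p4 cW q1 by linarith
    then show ?case using p5 by (simp add: dist_real_def)
  qed
qed

lemma toeplitz:
  fixes D :: "real \<Rightarrow> real \<Rightarrow> real" and w \<psi> :: "real \<Rightarrow> real" and F :: "real \<Rightarrow> real \<Rightarrow> real"
  assumes Dnn: "\<And>t s. 0 \<le> s \<Longrightarrow> s \<le> t \<Longrightarrow> 0 \<le> D t s"
   and Dmono: "\<And>t s T. 0 \<le> s \<Longrightarrow> s \<le> T \<Longrightarrow> T \<le> t \<Longrightarrow> D t s \<le> D t T"
   and Dlim: "\<And>T. 0 \<le> T \<Longrightarrow> ((\<lambda>t. D t T) \<longlongrightarrow> 0) at_top"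
   and Dc: "\<And>t. 0 \<le> t \<Longrightarrow> continuous_on {0..t} (D t)"
   and wnn: "\<And>s. 0 \<le> s \<Longrightarrow> 0 \<le> w s"
   and wc: "\<And>t. 0 \<le> t \<Longrightarrow> continuous_on {0..t} w"
   and W: "\<And>t. 0 \<le> t \<Longrightarrow> integral {0..t} (\<lambda>s. D t s * w s) \<le> W"
   and \<psi>c: "\<And>t. 0 \<le> t \<Longrightarrow> continuous_on {0..t} \<psi>"
   and \<psi>lim: "(\<psi> \<longlongrightarrow> 0) at_top"
   and Fc: "\<And>t. 0 \<le> t \<Longrightarrow> continuous_on {0..t} (F t)"
   and Fb: "\<And>t s. 0 \<le> s \<Longrightarrow> s \<le> t \<Longrightarrow> \<bar>F t s\<bar> \<le> D t s * w s * \<bar>\<psi> s\<bar>"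
  shows "((\<lambda>t. integral {0..t} (F t)) \<longlongrightarrow> 0) at_top"
proof (rule Lim_null_comparison)
  show "((\<lambda>t. integral {0..t} (\<lambda>s. D t s * w s * \<bar>\<psi> s\<bar>)) \<longlongrightarrow> 0) at_top"
    by (rule toeplitz0[OF Dnn Dmono Dlim Dc wnn wc W])
       (auto intro: continuous_intros \<psi>c tendsto_rabs_zero[OF \<psi>lim])
  show "\<forall>\<^sub>F t in at_top. norm (integral {0..t} (F t)) \<le> integral {0..t} (\<lambda>s. D t s * w s * \<bar>\<psi> s\<bar>)"
    using eventually_ge_at_top[of 0]
  proof eventually_elim
    case (elim t)
    show ?case
      by (rule integral_norm_bound_integral)
         (use elim Fb in \<open>auto intro!: integrable_continuous_interval continuous_intros Fc Dc wc \<psi>c\<close>)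
  qed
qed




lemma volterra:
  fixes D :: "real \<Rightarrow> real \<Rightarrow> real" and \<kappa> u h :: "real \<Rightarrow> real"
  assumes Dnn: "\<And>t s. 0 \<le> s \<Longrightarrow> s \<le> t \<Longrightarrow> 0 \<le> D t s"
   and Dle1: "\<And>t s. 0 \<le> s \<Longrightarrow> s \<le> t \<Longrightarrow> D t s \<le> 1"
   and Dmono: "\<And>t s T. 0 \<le> s \<Longrightarrow> s \<le> T \<Longrightarrow> T \<le> t \<Longrightarrow> D t s \<le> D t T"
   and Dlim: "\<And>T. 0 \<le> T \<Longrightarrow> ((\<lambda>t. D t T) \<longlongrightarrow> 0) at_top"
   and Dc: "\<And>t. 0 \<le> t \<Longrightarrow> continuous_on {0..t} (D t)"
   and \<kappa>nn: "\<And>s. 0 \<le> s \<Longrightarrow> 0 \<le> \<kappa> s"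
   and \<kappa>c: "\<And>t. 0 \<le> t \<Longrightarrow> continuous_on {0..t} \<kappa>"
   and K: "\<And>t. 0 \<le> t \<Longrightarrow> integral {0..t} \<kappa> \<le> K"
   and unn: "\<And>s. 0 \<le> s \<Longrightarrow> 0 \<le> u s"
   and uc: "\<And>t. 0 \<le> t \<Longrightarrow> continuous_on {0..t} u"
   and ineq: "\<And>t. 0 \<le> t \<Longrightarrow> u t \<le> h t + integral {0..t} (\<lambda>s. D t s * \<kappa> s * u s)"
   and hlim: "(h \<longlongrightarrow> 0) at_top"
  shows "(u \<longlongrightarrow> 0) at_top"
proof -
  define I where "I t = integral {0..t} \<kappa>" for t
  have \<kappa>int: "\<kappa> integrable_on {a..b}" if "0 \<le> a" for a b
    by (rule integrable_continuous_interval, rule cont_sub0[OF \<kappa>c, of a b "max b 0"]) (use that in auto)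
  have Icomb: "I b = I a + integral {a..b} \<kappa>" if "0 \<le> a" "a \<le> b" for a b
    unfolding I_def using Henstock_Kurzweil_Integration.integral_combine[OF that \<kappa>int[of 0 b]] by simp
  have tailnn: "0 \<le> integral {a..b} \<kappa>" if "0 \<le> a" for a b
    by (rule integral_nonneg[OF \<kappa>int[OF that]]) (use that \<kappa>nn in auto)
  have K0: "0 \<le> K" using K[of 0] by simp
  obtain T1 where T1: "0 \<le> T1" "\<And>S t. T1 \<le> S \<Longrightarrow> S \<le> t \<Longrightarrow> integral {S..t} \<kappa> \<le> 1/2"
  proof -
    define L where "L = Sup (I ` {0..})"
    have bdd: "bdd_above (I ` {0..})" unfolding I_def by (rule bdd_aboveI[where M=K]) (use K in auto)
    have "L - 1/2 < L" by simp
    then obtain T where T: "T \<in> {0..}" "L - 1/2 < I T"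
      unfolding L_def using less_cSup_iff[of "I ` {0..}" "L - 1/2", OF _ bdd] by (auto simp: L_def)
    show ?thesis
    proof (rule that[of T])
      show "0 \<le> T" using T by simp
      fix S t assume St: "T \<le> S" "S \<le> t"
      have "I t \<le> L" unfolding L_def by (rule cSup_upper[OF _ bdd]) (use St T in auto)
      moreover have "I T \<le> I S" using Icomb[of T S] tailnn[of T S] St T by auto
      moreover have "I t = I S + integral {S..t} \<kappa>" using Icomb[of S t] St T by auto
      ultimately show "integral {S..t} \<kappa> \<le> 1/2" using T by linarith
    qed
  qed
  have core: "integral {0..t} (\<lambda>s. D t s * \<kappa> s * u s) \<le> D t S * A * K + m * integral {S..t} \<kappa>"
    if S: "0 \<le> S" "S \<le> t" and A: "0 \<le> A" "\<And>s. s \<in> {0..S} \<Longrightarrow> u s \<le> A"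
      and m: "0 \<le> m" "\<And>s. s \<in> {S..t} \<Longrightarrow> u s \<le> m" for S t A m
  proof -
    have t0: "0 \<le> t" using S by simp
    have cc0: "continuous_on {0..t} (\<lambda>s. D t s * \<kappa> s * u s)"
      by (intro continuous_intros \<kappa>c uc Dc t0)
    have cc: "(\<lambda>s. D t s * \<kappa> s * u s) integrable_on {a..b}" if "0 \<le> a" "b \<le> t" for a b
      by (rule integrable_continuous_interval, rule continuous_on_subset[OF cc0]) (use that in auto)
    have split: "integral {0..t} (\<lambda>s. D t s * \<kappa> s * u s) = integral {0..S} (\<lambda>s. D t s * \<kappa> s * u s) + integral {S..t} (\<lambda>s. D t s * \<kappa> s * u s)"
      using Henstock_Kurzweil_Integration.integral_combine[OF S cc[of 0 t]] by simp
    have i1: "integral {0..S} (\<lambda>s. D t s * \<kappa> s * u s) \<le> integral {0..S} (\<lambda>s. (D t S * A) * \<kappa> s)"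
    proof (rule integral_le)
      show "(\<lambda>s. D t s * \<kappa> s * u s) integrable_on {0..S}" by (rule cc) (use S in auto)
      show "(\<lambda>s. (D t S * A) * \<kappa> s) integrable_on {0..S}" by (rule int_cmul, rule \<kappa>int) simp
      fix s assume s: "s \<in> {0..S}"
      have "D t s * u s \<le> D t S * A"
        by (rule mult_mono) (use s S A Dmono Dnn unn in auto)
      then have "D t s * u s * \<kappa> s \<le> (D t S * A) * \<kappa> s"
        by (rule mult_right_mono) (use \<kappa>nn[of s] s in auto)
      moreover have "D t s * \<kappa> s * u s = D t s * u s * \<kappa> s" by (simp add: ac_simps)
      ultimately show "D t s * \<kappa> s * u s \<le> (D t S * A) * \<kappa> s" by linarith
    qed
    have i1': "integral {0..S} (\<lambda>s. (D t S * A) * \<kappa> s) \<le> D t S * A * K"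
      using K[OF S(1)] Dnn[OF S] A(1) by (simp add: mult_left_mono)
    have i2: "integral {S..t} (\<lambda>s. D t s * \<kappa> s * u s) \<le> integral {S..t} (\<lambda>s. m * \<kappa> s)"
    proof (rule integral_le)
      show "(\<lambda>s. D t s * \<kappa> s * u s) integrable_on {S..t}" by (rule cc) (use S in auto)
      show "(\<lambda>s. m * \<kappa> s) integrable_on {S..t}" by (rule int_cmul, rule \<kappa>int) (use S in simp)
      fix s assume s: "s \<in> {S..t}"
      have "D t s * u s \<le> 1 * m"
        by (rule mult_mono) (use s S m Dle1 Dnn unn in auto)
      then have "D t s * u s * \<kappa> s \<le> (1 * m) * \<kappa> s"
        by (rule mult_right_mono) (use \<kappa>nn[of s] s S in auto)
      moreover have "D t s * \<kappa> s * u s = D t s * u s * \<kappa> s" by (simp add: ac_simps)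
      ultimately show "D t s * \<kappa> s * u s \<le> m * \<kappa> s" by (simp only: mult_1)
    qed
    show ?thesis using split i1 i1' i2 by simp
  qed
  obtain M where M0': "0 \<le> M" and M: "\<And>t. 0 \<le> t \<Longrightarrow> u t \<le> M"
  proof -
    have "\<forall>\<^sub>F t in at_top. dist (h t) 0 < 1" using hlim by (rule tendstoD) simp
    then obtain N where N: "\<And>t. t \<ge> N \<Longrightarrow> \<bar>h t\<bar> < 1" unfolding eventually_at_top_linorder by auto
    define T0 where "T0 = max T1 (max N 0)"
    have T0: "0 \<le> T0" "T1 \<le> T0" "N \<le> T0" unfolding T0_def by auto
    obtain M0' where M0': "\<And>s. s \<in> {0..T0} \<Longrightarrow> \<bar>u s\<bar> \<le> M0'"
      using compact_imp_bounded[OF compact_continuous_image[OF uc[OF T0(1)] compact_Icc]]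
      by (force simp: bounded_iff)
    define M0 where "M0 = max M0' 0"
    have M0: "\<And>s. s \<in> {0..T0} \<Longrightarrow> u s \<le> M0" "0 \<le> M0"
      using M0' unfolding M0_def by (auto simp: abs_le_iff) (meson le_max_iff_disj)
    have big: "u t \<le> 2 + 2 * M0 * K" if t: "T0 \<le> t" for t
    proof -
      have "\<exists>\<tau>\<in>{T0..t}. \<forall>s\<in>{T0..t}. u s \<le> u \<tau>"
        by (rule continuous_attains_sup) (use t T0 in \<open>auto intro: continuous_on_subset[OF uc[of t]]\<close>)
      then obtain \<tau> where \<tau>: "\<tau> \<in> {T0..t}" "\<And>s. s \<in> {T0..t} \<Longrightarrow> u s \<le> u \<tau>" by blast
      have \<tau>0: "0 \<le> \<tau>" using \<tau> T0 by auto
      have "integral {0..\<tau>} (\<lambda>s. D \<tau> s * \<kappa> s * u s) \<le> D \<tau> T0 * M0 * K + u \<tau> * integral {T0..\<tau>} \<kappa>"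
        by (rule core) (use \<tau> T0 M0 unn[OF \<tau>0] in auto)
      moreover have "D \<tau> T0 * M0 * K \<le> 1 * M0 * K"
        by (intro mult_right_mono Dle1) (use \<tau> T0 M0 K0 in auto)
      moreover have "u \<tau> * integral {T0..\<tau>} \<kappa> \<le> u \<tau> * (1/2)"
        by (rule mult_left_mono) (use T1 \<tau> T0 unn[OF \<tau>0] in auto)
      moreover have "h \<tau> < 1" using N[of \<tau>] \<tau> T0 by auto
      ultimately have "u \<tau> \<le> 1 + M0 * K + u \<tau> / 2" using ineq[OF \<tau>0] by simp
      then have "u \<tau> \<le> 2 + 2 * M0 * K" by simp
      then show ?thesis using \<tau>(2)[of t] t by simp
    qed
    show ?thesis
    proof (rule that[of "M0 + 2 + 2 * M0 * K"])
      show "0 \<le> M0 + 2 + 2 * M0 * K" using M0 K0 by simp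
      fix t :: real assume "0 \<le> t"
      show "u t \<le> M0 + 2 + 2 * M0 * K"
      proof (cases "t \<le> T0")
        case True then show ?thesis using M0(1)[of t] M0(2) \<open>0 \<le> t\<close> K0 by (simp add: add_increasing2)
      next
        case False then show ?thesis using big[of t] M0 by simp
      qed
    qed
  qed
  have step: "\<exists>S\<ge>T1. \<forall>t\<ge>S. u t \<le> 2 * \<epsilon> + M / 2^n" if e: "\<epsilon> > 0" for \<epsilon> n
  proof (induction n)
    case 0
    show ?case
    proof (rule exI[of _ T1], intro conjI allI impI)
      fix t assume "T1 \<le> t"
      then have "u t \<le> M" using M T1 by simp
      then show "u t \<le> 2 * \<epsilon> + M / 2 ^ 0" using e by simp
    qed simp
  next
    case (Suc n)
    then obtain S where S: "S \<ge> T1" "\<And>t. t \<ge> S \<Longrightarrow> u t \<le> 2 * \<epsilon> + M / 2^n" by blast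
    define m where "m = 2 * \<epsilon> + M / 2^n"
    have m0: "0 \<le> m" unfolding m_def using e M0' by simp
    have S0: "0 \<le> S" using S T1 by simp
    have ev1: "\<forall>\<^sub>F t in at_top. dist (h t) 0 < \<epsilon>/2" using hlim e by (intro tendstoD) auto
    have "((\<lambda>t. D t S * (M * K)) \<longlongrightarrow> 0) at_top" using tendsto_mult_left_zero[OF Dlim[OF S0]] by simp
    then have ev2: "\<forall>\<^sub>F t in at_top. dist (D t S * (M * K)) 0 < \<epsilon>/2" using e by (intro tendstoD) auto
    have "\<forall>\<^sub>F t in at_top. dist (h t) 0 < \<epsilon>/2 \<and> dist (D t S * (M * K)) 0 < \<epsilon>/2 \<and> t \<ge> S"
      using ev1 ev2 eventually_ge_at_top[of S] by eventually_elim auto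
    then obtain S' where S': "\<And>t. t \<ge> S' \<Longrightarrow> dist (h t) 0 < \<epsilon>/2 \<and> dist (D t S * (M * K)) 0 < \<epsilon>/2 \<and> t \<ge> S"
      unfolding eventually_at_top_linorder by blast
    show ?case
    proof (rule exI[of _ "max S' S"], intro conjI allI impI)
      show "T1 \<le> max S' S" using S by simp
      fix t assume t: "max S' S \<le> t"
      have tS: "S \<le> t" using t by simp
      have t0: "0 \<le> t" using tS S0 by simp
      have "integral {0..t} (\<lambda>s. D t s * \<kappa> s * u s) \<le> D t S * M * K + m * integral {S..t} \<kappa>"
        by (rule core) (use S0 tS M0' M m0 S(2) in \<open>auto simp: m_def\<close>)
      moreover have "m * integral {S..t} \<kappa> \<le> m * (1/2)"
        by (rule mult_left_mono) (use T1 S tS m0 in auto)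
      moreover have "h t < \<epsilon>/2" "D t S * M * K < \<epsilon>/2" using S'[of t] t by (auto simp: dist_real_def mult.assoc)
      ultimately have "u t \<le> \<epsilon> + m / 2" using ineq[OF t0] by simp
      moreover have "\<epsilon> + m / 2 = 2 * \<epsilon> + M / 2 ^ Suc n" unfolding m_def by (simp add: field_simps)
      ultimately show "u t \<le> 2 * \<epsilon> + M / 2 ^ Suc n" by simp
    qed
  qed
  show ?thesis
  proof (rule tendstoI)
    fix e :: real assume e: "0 < e"
    define \<epsilon> where "\<epsilon> = e / 4"
    have e': "\<epsilon> > 0" using e by (simp add: \<epsilon>_def)
    obtain n where n: "M / \<epsilon> < 2 ^ n" using real_arch_pow[of 2 "M / \<epsilon>"] by auto
    have n': "M / 2^n < \<epsilon>" using n e' by (simp add: field_simps)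
    obtain S where S: "S \<ge> T1" "\<And>t. t \<ge> S \<Longrightarrow> u t \<le> 2 * \<epsilon> + M / 2^n"
      using step[OF e', of n] by blast
    show "\<forall>\<^sub>F t in at_top. dist (u t) 0 < e"
      unfolding eventually_at_top_linorder
    proof (intro exI[of _ S] allI impI)
      fix t assume t: "S \<le> t"
      have "0 \<le> u t" using unn[of t] t S T1 by simp
      moreover have "u t < e" using S(2)[OF t] n' e unfolding \<epsilon>_def by linarith
      ultimately show "dist (u t) 0 < e" by (simp add: dist_real_def)
    qed
  qed
qed



context odes begin

lemma q_cont: "0 \<le> t \<Longrightarrow> continuous_on {0..t} q"
  unfolding q_def by (intro continuous_intros contsub[OF p_cont] contsub[OF p'_cont]) auto

definition "Qb = p 0 / 2 + integral {0..} (\<lambda>t. (p t)^2) / 4"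

lemma q_int_bound: assumes t: "0 \<le> t" shows "integral {0..t} (\<lambda>s. \<bar>q s\<bar>) \<le> Qb"
proof -
  have pc: "continuous_on {0..t} p" by (rule contsub[OF p_cont]) simp
  have p'c: "continuous_on {0..t} p'" by (rule contsub[OF p'_cont]) simp
  have ftc: "(p' has_integral (p t - p 0)) {0..t}"
    by (rule fundamental_theorem_of_calculus[OF t])
       (auto simp: has_real_derivative_iff_has_vector_derivative[symmetric] intro!: p_d)
  have i1: "integral {0..t} (\<lambda>s. \<bar>q s\<bar>) \<le> integral {0..t} (\<lambda>s. - p' s / 2 + (p s)^2 / 4)"
  proof (rule integral_le)
    show "(\<lambda>s. \<bar>q s\<bar>) integrable_on {0..t}"
      by (intro integrable_continuous_interval continuous_intros q_cont t)
    show "(\<lambda>s. - p' s / 2 + (p s)^2 / 4) integrable_on {0..t}"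
      by (intro integrable_continuous_interval continuous_intros pc p'c) auto
    fix s assume "s \<in> {0..t}"
    then have "p' s < 0" using p'_neg by auto
    then show "\<bar>q s\<bar> \<le> - p' s / 2 + (p s)^2 / 4" unfolding q_def by (simp add: abs_le_iff)
  qed
  have ftc': "((\<lambda>s. - p' s) has_integral (p 0 - p t)) {0..t}" using has_integral_neg[OF ftc] by simp
  have i2: "integral {0..t} (\<lambda>s. - p' s / 2 + (p s)^2 / 4) = (p 0 - p t) / 2 + integral {0..t} (\<lambda>s. (p s)^2) / 4"
  proof -
    have "((\<lambda>s. - p' s / 2 + (p s)^2 / 4) has_integral ((p 0 - p t) / 2 + integral {0..t} (\<lambda>s. (p s)^2) / 4)) {0..t}"
      by (intro has_integral_add has_integral_divide ftc' integrable_integral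
          integrable_continuous_interval continuous_intros pc)
    then show ?thesis by (rule integral_unique)
  qed
  have i3: "integral {0..t} (\<lambda>s. (p s)^2) \<le> integral {0..} (\<lambda>s. (p s)^2)"
    by (rule integral_subset_le) (auto intro!: integrable_continuous_interval continuous_intros pc p_sq_int)
  have "0 < p t" using p_bnd[OF t] by simp
  then have "integral {0..t} (\<lambda>s. \<bar>q s\<bar>) \<le> p 0 / 2 + integral {0..} (\<lambda>s. (p s)^2) / 4"
    using i1 i2 i3 by argo
  then show ?thesis unfolding Qb_def by simp
qed

lemma Ep_bound: assumes t: "0 \<le> t" shows "integral {0..t} (\<lambda>s. E2 t s * p s) \<le> 2"
proof -
  have "((\<lambda>s. E2 t s * p s) has_integral (2 * E2 t t - 2 * E2 t 0)) {0..t}"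
    by (rule fundamental_theorem_of_calculus[OF t])
       (auto simp: has_real_derivative_iff_has_vector_derivative[symmetric]
             intro!: derivative_eq_intros E2_d[OF t])
  then have "integral {0..t} (\<lambda>s. E2 t s * p s) = 2 - 2 * E2 t 0" by (simp add: integral_unique E2_tt)
  then show ?thesis using E2_pos[of t 0] by simp
qed

lemma Eq_bound: assumes t: "0 \<le> t" shows "integral {0..t} (\<lambda>s. E2 t s * \<bar>q s\<bar>) \<le> Qb"
proof -
  have "integral {0..t} (\<lambda>s. E2 t s * \<bar>q s\<bar>) \<le> integral {0..t} (\<lambda>s. \<bar>q s\<bar>)"
  proof (rule integral_le)
    show "(\<lambda>s. E2 t s * \<bar>q s\<bar>) integrable_on {0..t}"
      by (intro integrable_continuous_interval continuous_intros q_cont E2_cont t)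
    show "(\<lambda>s. \<bar>q s\<bar>) integrable_on {0..t}"
      by (intro integrable_continuous_interval continuous_intros q_cont t)
    fix s assume "s \<in> {0..t}"
    then show "E2 t s * \<bar>q s\<bar> \<le> \<bar>q s\<bar>" using E2_le1[of s t] E2_pos[of t s] by (simp add: mult_left_le_one_le)
  qed
  then show ?thesis using q_int_bound[OF t] by linarith
qed

definition "Dx t s = exp (- (\<omega>^2) * (t - s))"
definition "wx s = \<omega>^2 * p s - p' s + \<omega>^4 + \<omega>^2"
definition "Wx = (\<omega>^2 * p 0 + \<omega>^4 + \<omega>^2) / \<omega>^2 + p 0"

lemma Dx_lim: "((\<lambda>t. Dx t T) \<longlongrightarrow> 0) at_top"
proof -
  have "filterlim (\<lambda>t. (- T) + t) at_top at_top"
    by (rule filterlim_tendsto_add_at_top[OF tendsto_const filterlim_ident])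
  then have "filterlim (\<lambda>t. \<omega>^2 * ((- T) + t)) at_top at_top"
    by (intro filterlim_tendsto_pos_mult_at_top[OF tendsto_const _ \<open>filterlim _ at_top at_top\<close>]) (use omega_pos in simp)
  then have "filterlim (\<lambda>t. - (\<omega>^2 * ((- T) + t))) at_bot at_top"
    by (simp add: filterlim_uminus_at_top)
  then have "((\<lambda>t. exp (- (\<omega>^2 * ((- T) + t)))) \<longlongrightarrow> 0) at_top"
    by (rule filterlim_compose[OF exp_at_bot])
  moreover have "exp (- (\<omega>^2 * ((- T) + t))) = Dx t T" for t unfolding Dx_def by (simp add: algebra_simps)
  ultimately show ?thesis by simp
qed

lemma tb: "\<bar>c\<bar> \<le> 1 \<Longrightarrow> \<bar>a * c * b / (d::real)\<bar> \<le> \<bar>a\<bar> * \<bar>b / d\<bar>"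
proof -
  assume c: "\<bar>c\<bar> \<le> 1"
  have "a * c * b / d = (a * (b / d)) * c" by simp
  then have "\<bar>a * c * b / d\<bar> = \<bar>a * (b / d)\<bar> * \<bar>c\<bar>" by (simp only: abs_mult)
  also have "\<dots> \<le> \<bar>a * (b / d)\<bar> * 1" by (rule mult_left_mono[OF c]) simp
  finally show ?thesis by (simp add: abs_mult)
qed

lemma tb2: "\<bar>c\<bar> \<le> 1 \<Longrightarrow> \<bar>a * c * (b::real)\<bar> \<le> \<bar>a\<bar> * \<bar>b\<bar>"
  using tb[of c a b 1] by simp

lemma E2p_abs: "0 \<le> s \<Longrightarrow> \<bar>E2 t s * p s\<bar> = E2 t s * p s"
  using E2_pos[of t s] p_pos[of s] by simp

lemma E2q_abs: "\<bar>E2 t s * q s\<bar> = E2 t s * \<bar>q s\<bar>"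
  using E2_pos[of t s] by (simp add: abs_mult)

lemma lim_A1: assumes "(y \<longlongrightarrow> 0) at_top"
  shows "((\<lambda>t. integral {0..t} (\<lambda>s. E2 t s * p s * sin (\<omega> * (t - s)) * y s / (2 * \<omega>))) \<longlongrightarrow> 0) at_top"
proof (rule toeplitz[where D=E2 and w=p and \<psi>="\<lambda>s. y s / (2 * \<omega>)"])
  show "((\<lambda>s. y s / (2 * \<omega>)) \<longlongrightarrow> 0) at_top" using tendsto_divide_zero[OF assms] by simp
  fix t s :: real
  show "0 \<le> t \<Longrightarrow> continuous_on {0..t} (\<lambda>s. E2 t s * p s * sin (\<omega> * (t - s)) * y s / (2 * \<omega>))"
    using omega_pos by (intro continuous_intros E2_cont contsub[OF p_cont] y_cont) auto
  show "0 \<le> s \<Longrightarrow> s \<le> t \<Longrightarrow> \<bar>E2 t s * p s * sin (\<omega> * (t - s)) * y s / (2 * \<omega>)\<bar> \<le> E2 t s * p s * \<bar>y s / (2 * \<omega>)\<bar>"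
    using tb[of "sin (\<omega> * (t - s))" "E2 t s * p s" "y s" "2 * \<omega>"] E2p_abs[of s t] by simp
qed (use omega_pos in \<open>auto intro: less_imp_le E2_pos E2_mono E2_lim E2_cont contsub[OF p_cont] p_pos Ep_bound
     continuous_intros y_cont\<close>)

lemma lim_A2: assumes "(y \<longlongrightarrow> 0) at_top"
  shows "((\<lambda>t. integral {0..t} (\<lambda>s. E2 t s * p s * cos (\<omega> * (t - s)) * y s / 2)) \<longlongrightarrow> 0) at_top"
proof (rule toeplitz[where D=E2 and w=p and \<psi>="\<lambda>s. y s / 2"])
  show "((\<lambda>s. y s / 2) \<longlongrightarrow> 0) at_top" using tendsto_divide_zero[OF assms] by simp
  fix t s :: real
  show "0 \<le> t \<Longrightarrow> continuous_on {0..t} (\<lambda>s. E2 t s * p s * cos (\<omega> * (t - s)) * y s / 2)"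
    by (intro continuous_intros E2_cont contsub[OF p_cont] y_cont) auto
  show "0 \<le> s \<Longrightarrow> s \<le> t \<Longrightarrow> \<bar>E2 t s * p s * cos (\<omega> * (t - s)) * y s / 2\<bar> \<le> E2 t s * p s * \<bar>y s / 2\<bar>"
    using tb[of "cos (\<omega> * (t - s))" "E2 t s * p s" "y s" "2"] E2p_abs[of s t] by simp
qed (use omega_pos in \<open>auto intro: less_imp_le E2_pos E2_mono E2_lim E2_cont contsub[OF p_cont] p_pos Ep_bound
     continuous_intros y_cont\<close>)

lemma lim_B1: assumes "(x \<longlongrightarrow> 0) at_top"
  shows "((\<lambda>t. integral {0..t} (\<lambda>s. E2 t s * q s * sin (\<omega> * (t - s)) * x s / \<omega>)) \<longlongrightarrow> 0) at_top"
proof (rule toeplitz[where D=E2 and w="\<lambda>s. \<bar>q s\<bar>" and \<psi>="\<lambda>s. x s / \<omega>"])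
  show "((\<lambda>s. x s / \<omega>) \<longlongrightarrow> 0) at_top" using tendsto_divide_zero[OF assms] by simp
  fix t s :: real
  show "0 \<le> t \<Longrightarrow> continuous_on {0..t} (\<lambda>s. E2 t s * q s * sin (\<omega> * (t - s)) * x s / \<omega>)"
    using omega_pos by (intro continuous_intros E2_cont q_cont contsub[OF x_cont]) auto
  show "0 \<le> s \<Longrightarrow> s \<le> t \<Longrightarrow> \<bar>E2 t s * q s * sin (\<omega> * (t - s)) * x s / \<omega>\<bar> \<le> E2 t s * \<bar>q s\<bar> * \<bar>x s / \<omega>\<bar>"
    using tb[of "sin (\<omega> * (t - s))" "E2 t s * q s" "x s" "\<omega>"] E2q_abs[of t s] by simp
qed (use omega_pos in \<open>auto intro: less_imp_le E2_pos E2_mono E2_lim E2_cont q_cont Eq_bound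
     continuous_intros contsub[OF x_cont]\<close>)

lemma lim_B2: assumes "(x \<longlongrightarrow> 0) at_top"
  shows "((\<lambda>t. integral {0..t} (\<lambda>s. E2 t s * q s * cos (\<omega> * (t - s)) * x s)) \<longlongrightarrow> 0) at_top"
proof (rule toeplitz[where D=E2 and w="\<lambda>s. \<bar>q s\<bar>" and \<psi>="x"])
  fix t s :: real
  show "0 \<le> t \<Longrightarrow> continuous_on {0..t} (\<lambda>s. E2 t s * q s * cos (\<omega> * (t - s)) * x s)"
    by (intro continuous_intros E2_cont q_cont contsub[OF x_cont]) auto
  show "0 \<le> s \<Longrightarrow> s \<le> t \<Longrightarrow> \<bar>E2 t s * q s * cos (\<omega> * (t - s)) * x s\<bar> \<le> E2 t s * \<bar>q s\<bar> * \<bar>x s\<bar>"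
    using tb2[of "cos (\<omega> * (t - s))" "E2 t s * q s" "x s"] E2q_abs[of t s] by simp
qed (use omega_pos assms in \<open>auto intro: less_imp_le E2_pos E2_mono E2_lim E2_cont q_cont Eq_bound
     continuous_intros contsub[OF x_cont]\<close>)

lemma Dx_mono: "s \<le> T \<Longrightarrow> Dx t s \<le> Dx t T"
  unfolding Dx_def by (simp add: mult_left_mono)

lemma Dx_le1: "s \<le> t \<Longrightarrow> Dx t s \<le> 1"
  unfolding Dx_def by (simp add: mult_nonneg_nonneg)

lemma Dx_cont: "continuous_on S (Dx t)"
  unfolding Dx_def by (intro continuous_intros)

lemma wx_nn: "0 \<le> s \<Longrightarrow> 0 \<le> wx s"
proof -
  assume s: "0 \<le> s"
  have "0 \<le> \<omega>^2 * p s" using p_pos[OF s] by simp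
  moreover have "0 \<le> \<omega>^4" by simp
  moreover have "0 \<le> \<omega>^2" by simp
  ultimately show ?thesis unfolding wx_def using p'_neg[OF s] by linarith
qed

lemma wx_cont: "0 \<le> t \<Longrightarrow> continuous_on {0..t} wx"
  unfolding wx_def by (intro continuous_intros contsub[OF p_cont] contsub[OF p'_cont]) auto

lemma Dx_pos: "0 < Dx t s" unfolding Dx_def by simp

lemma Wx_bound: assumes t: "0 \<le> t" shows "integral {0..t} (\<lambda>s. Dx t s * wx s) \<le> Wx"
proof -
  define C1 where "C1 = \<omega>^2 * p 0 + \<omega>^4 + \<omega>^2"
  have w2: "\<omega>^2 > 0" using omega_pos by simp
  have pc: "continuous_on {0..t} p" by (rule contsub[OF p_cont]) simp
  have p'c: "continuous_on {0..t} p'" by (rule contsub[OF p'_cont]) simp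
  have ftc0: "(p' has_integral (p t - p 0)) {0..t}"
    by (rule fundamental_theorem_of_calculus[OF t])
       (auto simp: has_real_derivative_iff_has_vector_derivative[symmetric] intro!: p_d)
  have ftc: "((\<lambda>s. - p' s) has_integral (p 0 - p t)) {0..t}" using has_integral_neg[OF ftc0] by simp
  have ftc2: "((\<lambda>s. C1 * Dx t s) has_integral (C1 * Dx t t / \<omega>^2 - C1 * Dx t 0 / \<omega>^2)) {0..t}"
    by (rule fundamental_theorem_of_calculus[OF t])
       (use w2 in \<open>auto simp: has_real_derivative_iff_has_vector_derivative[symmetric] Dx_def
          power4_eq_xxxx power2_eq_square intro!: derivative_eq_intros\<close>)
  have "integral {0..t} (\<lambda>s. Dx t s * wx s) \<le> integral {0..t} (\<lambda>s. C1 * Dx t s + - p' s)"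
  proof (rule integral_le)
    show "(\<lambda>s. Dx t s * wx s) integrable_on {0..t}"
      unfolding wx_def by (intro integrable_continuous_interval continuous_intros Dx_cont pc p'c)
    show "(\<lambda>s. C1 * Dx t s + - p' s) integrable_on {0..t}"
      using ftc ftc2 by (intro integrable_add) auto
    fix s assume s: "s \<in> {0..t}"
    have a: "Dx t s * (\<omega>^2 * p s + \<omega>^4 + \<omega>^2) \<le> Dx t s * C1"
      unfolding C1_def using p_bnd[of s] s w2 by (intro mult_left_mono) (auto simp: Dx_def)
    have b: "Dx t s * (- p' s) \<le> 1 * (- p' s)"
      using p'_neg[of s] s Dx_le1[of s t] by (intro mult_right_mono) auto
    have "Dx t s * wx s = Dx t s * (\<omega>^2 * p s + \<omega>^4 + \<omega>^2) + Dx t s * (- p' s)"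
      unfolding wx_def by (simp add: algebra_simps)
    then show "Dx t s * wx s \<le> C1 * Dx t s + - p' s" using a b by (simp add: mult.commute)
  qed
  also have "\<dots> = (C1 * Dx t t / \<omega>^2 - C1 * Dx t 0 / \<omega>^2) + (p 0 - p t)"
    by (rule integral_unique, rule has_integral_add[OF ftc2 ftc])
  also have "\<dots> \<le> Wx"
  proof -
    have "C1 * Dx t 0 / \<omega>^2 \<ge> 0" unfolding C1_def Dx_def using p_bnd[of 0] w2 by simp
    moreover have "C1 * Dx t t / \<omega>^2 = C1 / \<omega>^2" unfolding Dx_def by simp
    moreover have "p t > 0" using p_bnd[OF t] by simp
    moreover have "Wx = C1 / \<omega>^2 + p 0" unfolding Wx_def C1_def by simp
    ultimately show ?thesis by linarith
  qed
  finally show ?thesis .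
qed

lemma lim_Y: assumes "(x \<longlongrightarrow> 0) at_top"
  shows "((\<lambda>t. integral {0..t} (\<lambda>s. exp (- (\<omega>^2) * (t - s)) * (\<omega>^2 * p s + p' s - \<omega>^4 - \<omega>^2) * x s)) \<longlongrightarrow> 0) at_top"
proof (rule toeplitz[where D=Dx and w=wx and \<psi>="x"])
  fix t s :: real
  show "0 \<le> t \<Longrightarrow> continuous_on {0..t} (\<lambda>s. exp (- (\<omega>^2) * (t - s)) * (\<omega>^2 * p s + p' s - \<omega>^4 - \<omega>^2) * x s)"
    by (intro continuous_intros contsub[OF p_cont] contsub[OF p'_cont] contsub[OF x_cont]) auto
  assume s: "0 \<le> s" "s \<le> t"
  have "\<bar>\<omega>^2 * p s + p' s - \<omega>^4 - \<omega>^2\<bar> \<le> wx s"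
  proof -
    have "0 \<le> \<omega>^2 * p s" using p_pos[of s] s by simp
    moreover have "0 \<le> \<omega>^4" by simp
    moreover have "0 \<le> \<omega>^2" by simp
    ultimately show ?thesis unfolding wx_def abs_le_iff using p'_neg[of s] s by linarith
  qed
  then show "\<bar>exp (- (\<omega>^2) * (t - s)) * (\<omega>^2 * p s + p' s - \<omega>^4 - \<omega>^2) * x s\<bar> \<le> Dx t s * wx s * \<bar>x s\<bar>"
    unfolding Dx_def by (simp add: abs_mult mult_left_mono mult_right_mono)
qed (use assms in \<open>auto intro: less_imp_le Dx_pos Dx_mono Dx_lim Dx_cont wx_nn Wx_bound wx_cont
     contsub[OF x_cont] simp: Dx_def[symmetric]\<close>)

end


context odes begin

lemma px_lim: assumes "(x \<longlongrightarrow> 0) at_top" shows "((\<lambda>t. p t * x t) \<longlongrightarrow> 0) at_top"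
proof (rule Lim_null_comparison)
  show "\<forall>\<^sub>F t in at_top. norm (p t * x t) \<le> p 0 * \<bar>x t\<bar>"
    using eventually_ge_at_top[of 0]
  proof eventually_elim
    case (elim t) then show ?case using p_bnd[of t] by (simp add: abs_mult mult_right_mono)
  qed
  show "((\<lambda>t. p 0 * \<bar>x t\<bar>) \<longlongrightarrow> 0) at_top"
    using tendsto_mult_right_zero[OF tendsto_rabs_zero[OF assms]] by simp
qed

lemma main:
  "((y \<longlongrightarrow> 0) at_top
    \<and> ((\<lambda>t. integral {0..t} (\<lambda>s. Efun p t s * L1 \<omega> t s * y s)) \<longlongrightarrow> 0) at_top
    \<and> ((\<lambda>t. integral {0..t} (\<lambda>s. Efun p t s * L2 \<omega> t s * y s)) \<longlongrightarrow> 0) at_top)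
   \<longleftrightarrow> ((x \<longlongrightarrow> 0) at_top \<and> (x' \<longlongrightarrow> 0) at_top)"
  (is "(?Y \<and> ?U \<and> ?V) \<longleftrightarrow> (?X \<and> ?X')")
proof -
  define U where "U t = integral {0..t} (\<lambda>s. Efun p t s * L1 \<omega> t s * y s)" for t
  define V where "V t = integral {0..t} (\<lambda>s. Efun p t s * L2 \<omega> t s * y s)" for t
  define A1 where "A1 t = integral {0..t} (\<lambda>s. E2 t s * p s * sin (\<omega> * (t - s)) * y s / (2 * \<omega>))" for t
  define A2 where "A2 t = integral {0..t} (\<lambda>s. E2 t s * p s * cos (\<omega> * (t - s)) * y s / 2)" for t
  define B1 where "B1 t = integral {0..t} (\<lambda>s. E2 t s * q s * sin (\<omega> * (t - s)) * x s / \<omega>)" for t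
  define B2 where "B2 t = integral {0..t} (\<lambda>s. E2 t s * q s * cos (\<omega> * (t - s)) * x s)" for t
  define Yk where "Yk t = integral {0..t} (\<lambda>s. exp (- (\<omega>^2) * (t - s)) * (\<omega>^2 * p s + p' s - \<omega>^4 - \<omega>^2) * x s)" for t
  have xr: "x t = U t - A1 t + B1 t" if "0 \<le> t" for t
    unfolding U_def A1_def B1_def by (rule x_rep[OF that])
  have x'r: "x' t = y t - p t * x t / 2 + V t - A2 t + B2 t" if "0 \<le> t" for t
    unfolding V_def A2_def B2_def by (rule x'_rep[OF that])
  have yr: "y t = x' t - \<omega>^2 * x t + p t * x t - Yk t" if "0 \<le> t" for t
    unfolding Yk_def by (rule y_rep[OF that])
  have ev0: "\<forall>\<^sub>F t in at_top. (0::real) \<le> t" by (rule eventually_ge_at_top)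
  show ?thesis
  proof
    assume "?X \<and> ?X'"
    then have hx: "(x \<longlongrightarrow> 0) at_top" and hx': "(x' \<longlongrightarrow> 0) at_top" by auto
    have hy: "(y \<longlongrightarrow> 0) at_top"
    proof (rule Lim_transform_eventually)
      show "((\<lambda>t. x' t - \<omega>^2 * x t + p t * x t - Yk t) \<longlongrightarrow> 0) at_top"
        using tendsto_diff[OF tendsto_add[OF tendsto_diff[OF hx' tendsto_mult_right_zero[OF hx]] px_lim[OF hx]]
              lim_Y[OF hx, folded Yk_def]] by simp
      show "\<forall>\<^sub>F t in at_top. x' t - \<omega>^2 * x t + p t * x t - Yk t = y t"
        using ev0 by eventually_elim (simp add: yr)
    qed
    have hU: "(U \<longlongrightarrow> 0) at_top"
    proof (rule Lim_transform_eventually)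
      show "((\<lambda>t. x t + A1 t - B1 t) \<longlongrightarrow> 0) at_top"
        using tendsto_diff[OF tendsto_add[OF hx lim_A1[OF hy, folded A1_def]] lim_B1[OF hx, folded B1_def]] by simp
      show "\<forall>\<^sub>F t in at_top. x t + A1 t - B1 t = U t"
        using ev0 by eventually_elim (simp add: xr)
    qed
    have hV: "(V \<longlongrightarrow> 0) at_top"
    proof (rule Lim_transform_eventually)
      show "((\<lambda>t. x' t - y t + p t * x t / 2 + A2 t - B2 t) \<longlongrightarrow> 0) at_top"
        using tendsto_diff[OF tendsto_add[OF tendsto_add[OF tendsto_diff[OF hx' hy] tendsto_divide_zero[OF px_lim[OF hx]]]
              lim_A2[OF hy, folded A2_def]] lim_B2[OF hx, folded B2_def]] by simp
      show "\<forall>\<^sub>F t in at_top. x' t - y t + p t * x t / 2 + A2 t - B2 t = V t"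
        using ev0 by eventually_elim (simp add: x'r)
    qed
    show "?Y \<and> ?U \<and> ?V" using hy hU hV unfolding U_def V_def by auto
  next
    assume "?Y \<and> ?U \<and> ?V"
    then have hy: "(y \<longlongrightarrow> 0) at_top" and hU: "(U \<longlongrightarrow> 0) at_top" and hV: "(V \<longlongrightarrow> 0) at_top"
      unfolding U_def V_def by auto
    have hA1: "(A1 \<longlongrightarrow> 0) at_top" using lim_A1[OF hy] unfolding A1_def .
    have w: "\<omega> > 0" by (rule omega_pos)
    have hax: "((\<lambda>t. \<bar>x t\<bar>) \<longlongrightarrow> 0) at_top"
    proof (rule volterra[where D=E2 and \<kappa>="\<lambda>s. \<bar>q s\<bar> / \<omega>" and h="\<lambda>t. \<bar>U t - A1 t\<bar>" and K="Qb / \<omega>"])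
      show "((\<lambda>t. \<bar>U t - A1 t\<bar>) \<longlongrightarrow> 0) at_top"
      proof -
        have "((\<lambda>t. U t - A1 t) \<longlongrightarrow> 0) at_top" using tendsto_diff[OF hU hA1] by simp
        then show ?thesis by (rule tendsto_rabs_zero)
      qed
      show "continuous_on {0..t} (\<lambda>s. \<bar>q s\<bar> / \<omega>)" if "0 \<le> t" for t
        using w by (intro continuous_intros q_cont that) auto
      fix t :: real assume t: "0 \<le> t"
      have qi: "(\<lambda>s. \<bar>q s\<bar>) integrable_on {0..t}"
        by (intro integrable_continuous_interval continuous_intros q_cont t)
      have "((\<lambda>s. \<bar>q s\<bar> / \<omega>) has_integral (integral {0..t} (\<lambda>s. \<bar>q s\<bar>) / \<omega>)) {0..t}"
        by (intro has_integral_divide integrable_integral qi)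
      then have "integral {0..t} (\<lambda>s. \<bar>q s\<bar> / \<omega>) = integral {0..t} (\<lambda>s. \<bar>q s\<bar>) / \<omega>"
        by (rule integral_unique)
      then show "integral {0..t} (\<lambda>s. \<bar>q s\<bar> / \<omega>) \<le> Qb / \<omega>"
        using q_int_bound[OF t] w by (simp add: divide_right_mono)
      have "norm (B1 t) \<le> integral {0..t} (\<lambda>s. E2 t s * (\<bar>q s\<bar> / \<omega>) * \<bar>x s\<bar>)"
        unfolding B1_def
      proof (rule integral_norm_bound_integral)
        show "(\<lambda>s. E2 t s * q s * sin (\<omega> * (t - s)) * x s / \<omega>) integrable_on {0..t}"
          using w by (intro integrable_continuous_interval continuous_intros E2_cont q_cont contsub[OF x_cont] t) auto
        show "(\<lambda>s. E2 t s * (\<bar>q s\<bar> / \<omega>) * \<bar>x s\<bar>) integrable_on {0..t}"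
          using w by (intro integrable_continuous_interval continuous_intros E2_cont q_cont contsub[OF x_cont] t) auto
        fix s assume "s \<in> {0..t}"
        have "\<bar>E2 t s * q s * sin (\<omega> * (t - s)) * x s / \<omega>\<bar> \<le> \<bar>E2 t s * q s\<bar> * \<bar>x s / \<omega>\<bar>"
          by (rule tb) simp
        also have "\<dots> = E2 t s * (\<bar>q s\<bar> / \<omega>) * \<bar>x s\<bar>"
          using w by (simp add: E2q_abs abs_divide)
        finally show "norm (E2 t s * q s * sin (\<omega> * (t - s)) * x s / \<omega>) \<le> E2 t s * (\<bar>q s\<bar> / \<omega>) * \<bar>x s\<bar>"
          by simp
      qed
      then show "\<bar>x t\<bar> \<le> \<bar>U t - A1 t\<bar> + integral {0..t} (\<lambda>s. E2 t s * (\<bar>q s\<bar> / \<omega>) * \<bar>x s\<bar>)"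
        using xr[OF t] by (simp add: abs_le_iff) linarith
    qed (use w in \<open>auto intro: less_imp_le E2_pos E2_le1 E2_mono E2_lim E2_cont continuous_intros q_cont contsub[OF x_cont]\<close>)
    then have hx: "(x \<longlongrightarrow> 0) at_top" by (simp add: tendsto_rabs_zero_iff)
    have hx': "(x' \<longlongrightarrow> 0) at_top"
    proof (rule Lim_transform_eventually)
      show "((\<lambda>t. y t - p t * x t / 2 + V t - A2 t + B2 t) \<longlongrightarrow> 0) at_top"
        using tendsto_add[OF tendsto_diff[OF tendsto_add[OF tendsto_diff[OF hy tendsto_divide_zero[OF px_lim[OF hx]]] hV]
              lim_A2[OF hy, folded A2_def]] lim_B2[OF hx, folded B2_def]] by simp
      show "\<forall>\<^sub>F t in at_top. y t - p t * x t / 2 + V t - A2 t + B2 t = x' t"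
        using ev0 by eventually_elim (simp add: x'r)
    qed
    show "?X \<and> ?X'" using hx hx' by simp
  qed
qed

end


theorem mainTheorem10:
  fixes \<omega> :: real and p p' f x x' :: "real \<Rightarrow> real"
  assumes omega_pos: "\<omega> > 0"
    and p_deriv: "\<And>t. t \<ge> 0 \<Longrightarrow> (p has_real_derivative p' t) (at t within {0..})"
    and p'_cont: "continuous_on {0..} p'"
    and p_pos: "\<And>t. t \<ge> 0 \<Longrightarrow> p t > 0"
    and p'_neg: "\<And>t. t \<ge> 0 \<Longrightarrow> p' t < 0"
    and p_int_infty: "filterlim (\<lambda>t. integral {0..t} p) at_top at_top"
    and p_sq_int: "(\<lambda>t. (p t)^2) integrable_on {0..}"
    and f_loc: "\<And>t. t \<ge> 0 \<Longrightarrow> f absolutely_integrable_on {0..t}"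
    and x_deriv: "\<And>t. t \<ge> 0 \<Longrightarrow> (x has_real_derivative x' t) (at t within {0..})"
    and x'_cont: "continuous_on {0..} x'"
    and x_ode: "\<And>t. t \<ge> 0 \<Longrightarrow>
       ((\<lambda>s. f s - p s * x' s - \<omega>^2 * x s) has_integral (x' t - x' 0)) {0..t}"
    and x0: "x 0 = 0" and x'0: "x' 0 = 0"
  shows "((y1 \<omega> f \<longlongrightarrow> 0) at_top
          \<and> ((\<lambda>t. integral {0..t} (\<lambda>s. Efun p t s * L1 \<omega> t s * y1 \<omega> f s)) \<longlongrightarrow> 0) at_top
          \<and> ((\<lambda>t. integral {0..t} (\<lambda>s. Efun p t s * L2 \<omega> t s * y1 \<omega> f s)) \<longlongrightarrow> 0) at_top)
     \<longleftrightarrow> ((x \<longlongrightarrow> 0) at_top \<and> (x' \<longlongrightarrow> 0) at_top)"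
  proof -
  interpret odes \<omega> p p' f x x'
    by (rule odes.intro) (fact+)
  show ?thesis using main by simp
qed

end
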